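(* Let $\{(\mathcal{T}^h,\Sigma^h)\}_{h>0}$ be non-degenerate tessellations of $\Omega$ satisfying the orthogonality assumption, let $V$ be as below and let $W$ satisfy the (Pointy) assumption. Let $\{\rho^h\in\mathcal{P}(\mathcal{T}^h)\}_{h>0}$ be such that $\mathrm{d}\hat\rho^h/\mathrm{d}\mathcal{L}^d\to\mathrm{d}\rho/\mathrm{d}\mathcal{L}^d$ in $L^1(\Omega)$ and $\sup_{h>0}\int_\Omega\phi(\mathrm{d}\hat\rho^h/\mathrm{d}\mathcal{L}^d)\,\mathrm{d}\mathcal{L}^d<\infty$, where $\phi(s)=s\log s-s+1$. Then, with $o(h)$ uniform over $(K,L)\in\Sigma^h$, \[ q_{K|L}=\nabla\mathsf{Q}(\hat\rho^h)(x_{KL})\cdot(x_L-x_K)+o(h)\quad\text{for any }x_{KL}\in K\cup L, \] and moreover \[ q_{K|L}=\frac1{|K|}\int_K\nabla\mathsf{Q}(\hat\rho^h)(x)\,\mathrm{d}x\cdot(x_L-x_K)+o(h),\qquad q_{K|L}=\frac1{|(K|L)|}\int_{(K|L)}\nabla\mathsf{Q}(\hat\rho^h)\,\mathrm{d}\mathcal{H}^{d-1}\cdot(x_L-x_K)+o(h). \]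
   Context: $\Omega\subset\mathbb{R}^d$ open bounded convex. Tessellation $(\mathcal{T}^h,\Sigma^h)$: mutually disjoint open convex cells covering $\Omega$; $\Sigma^h$ the ordered pairs of cells whose closures share a face $(K|L)$ of positive $\mathcal{H}^{d-1}$-measure; $h=\max\mathrm{diam}K$; $x_K$ barycenter. Non-degenerate: some $\zeta\in(0,1)$ independent of $h$ with $B(x_K,\zeta h)\subset K$ and $|(K|L)|\ge\zeta h^{d-1}$. Orthogonality: $(K|L)\perp(x_L-x_K)$. $V\in\mathrm{Lip}(\mathbb{R}^d)\cap C^1(\mathbb{R}^d)$ bounded below; $W\ge0$, $W(x)=W(-x)$, (Pointy): $W\in\mathrm{Lip}(\mathbb{R}^d)\cap C^1(\mathbb{R}^d\setminus\{0\})$. $V_K=V(x_K)$, $W_{KL}=W(x_L-x_K)$, $q_{K|L}=V_L-V_K+\sum_M\rho^h_M(W_{ML}-W_{MK})$. $\mathrm{d}\hat\rho^h/\mathrm{d}\mathcal{L}^d=\sum_K\frac{\rho^h_K}{|K|}\mathbb{1}_K$; $\mathsf{Q}(\rho)=V+W*\rho$. *)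

theory Defs
  imports "HOL-Analysis.Analysis"
begin

definition grad :: "('a::euclidean_space \<Rightarrow> real) \<Rightarrow> 'a \<Rightarrow> 'a" where
  "grad f x = (\<Sum>b\<in>Basis. frechet_derivative f (at x) b *\<^sub>R b)"

definition haus_alpha :: "nat \<Rightarrow> real" where
  "haus_alpha s = pi powr (real s / 2) / Gamma (real s / 2 + 1)"

definition haus_cost :: "nat \<Rightarrow> 'a::metric_space set \<Rightarrow> real" where
  "haus_cost s C = (if C = {} then 0 else haus_alpha s * (diameter C / 2) ^ s)"

definition hausdorff_outer :: "nat \<Rightarrow> 'a::metric_space set \<Rightarrow> ennreal" where
  "hausdorff_outer s A =
     (SUP \<delta>\<in>{0<..}. INF C\<in>{C :: nat \<Rightarrow> 'a set. A \<subseteq> (\<Union>i. C i) \<and>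
                                  (\<forall>i. bounded (C i) \<and> diameter (C i) \<le> \<delta>)}.
                      (\<Sum>i. ennreal (haus_cost s (C i))))"

definition hausdorff_measure :: "nat \<Rightarrow> 'a::euclidean_space measure" where
  "hausdorff_measure s = measure_of UNIV (sets borel) (hausdorff_outer s)"

definition bary :: "'a::euclidean_space set \<Rightarrow> 'a" where
  "bary K = (1 / measure lebesgue K) *\<^sub>R set_lebesgue_integral lebesgue K (\<lambda>x. x)"

definition face :: "'a::euclidean_space set \<Rightarrow> 'a set \<Rightarrow> 'a set" where
  "face K L = closure K \<inter> closure L"

definition edges :: "'a::euclidean_space set set \<Rightarrow> ('a set \<times> 'a set) set" where
  "edges T = {(K, L). K \<in> T \<and> L \<in> T \<and> K \<noteq> L \<and>
      emeasure (hausdorff_measure (DIM('a) - 1)) (face K L) > 0}"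

definition tessellation :: "'a::euclidean_space set \<Rightarrow> 'a set set \<Rightarrow> bool" where
  "tessellation \<Omega> T \<longleftrightarrow> finite T \<and> T \<noteq> {} \<and>
     (\<forall>K\<in>T. open K \<and> convex K \<and> K \<noteq> {} \<and> K \<subseteq> \<Omega>) \<and>
     (\<forall>K\<in>T. \<forall>L\<in>T. K \<noteq> L \<longrightarrow> K \<inter> L = {}) \<and>
     \<Omega> \<subseteq> \<Union>(closure ` T)"

definition mesh :: "'a::euclidean_space set set \<Rightarrow> real" where
  "mesh T = Max (diameter ` T)"

definition rhohat :: "'a::euclidean_space set set \<Rightarrow> ('a set \<Rightarrow> real) \<Rightarrow> 'a \<Rightarrow> real" where
  "rhohat T \<rho> x = (\<Sum>K\<in>T. \<rho> K / measure lebesgue K * indicator K x)"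

definition Qpot :: "('a::euclidean_space \<Rightarrow> real) \<Rightarrow> ('a \<Rightarrow> real) \<Rightarrow> ('a \<Rightarrow> real) \<Rightarrow> 'a \<Rightarrow> real" where
  "Qpot V W g x = V x + (\<integral>y. W (x - y) * g y \<partial>lebesgue)"

definition qKL :: "('a::euclidean_space \<Rightarrow> real) \<Rightarrow> ('a \<Rightarrow> real) \<Rightarrow> 'a set set \<Rightarrow>
                  ('a set \<Rightarrow> real) \<Rightarrow> 'a set \<Rightarrow> 'a set \<Rightarrow> real" where
  "qKL V W T \<rho> K L = V (bary L) - V (bary K) +
     (\<Sum>M\<in>T. \<rho> M * (W (bary L - bary M) - W (bary K - bary M)))"

definition phi_ent :: "real \<Rightarrow> real" where
  "phi_ent s = (if s = 0 then 1 else s * ln s - s + 1)"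

end

theory Submission
  imports Defs "HOL-Analysis.Analysis"
begin


lemma grad_hasderiv:
  fixes f :: "'a::euclidean_space \<Rightarrow> real"
  assumes "f differentiable (at x)"
  shows "(f has_derivative (\<lambda>u. grad f x \<bullet> u)) (at x)"
proof -
  let ?f' = "frechet_derivative f (at x)"
  have d: "(f has_derivative ?f') (at x)" using assms frechet_derivative_works by blast
  have lin: "linear ?f'" using has_derivative_linear[OF d] .
  have eq: "?f' u = grad f x \<bullet> u" for u
  proof -
    have "?f' u = ?f' (\<Sum>b\<in>Basis. (u \<bullet> b) *\<^sub>R b)" by (simp add: euclidean_representation)
    also have "\<dots> = (\<Sum>b\<in>Basis. (u \<bullet> b) * ?f' b)"
      using lin by (simp add: linear_sum linear_scale)
    also have "\<dots> = grad f x \<bullet> u"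
      unfolding grad_def by (simp add: inner_sum_right inner_commute mult.commute)
    finally show ?thesis .
  qed
  have "?f' = (\<lambda>u. grad f x \<bullet> u)" using eq by auto
  with d show ?thesis by simp
qed

lemma grad_eq:
  fixes f :: "'a::euclidean_space \<Rightarrow> real"
  assumes "(f has_derivative (\<lambda>u. g \<bullet> u)) (at x)"
  shows "grad f x = g"
proof -
  have "frechet_derivative f (at x) = (\<lambda>u. g \<bullet> u)" using frechet_derivative_at[OF assms] by simp
  then have "grad f x = (\<Sum>b\<in>Basis. (g \<bullet> b) *\<^sub>R b)" unfolding grad_def by (simp add: inner_commute)
  then show ?thesis by (simp add: euclidean_representation)
qed

lemma lip_grad_bound:
  fixes f :: "'a::euclidean_space \<Rightarrow> real"
  assumes L: "L-lipschitz_on UNIV f" and d: "(f has_derivative (\<lambda>u. g \<bullet> u)) (at x)"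
  shows "norm g \<le> L"
proof (rule ccontr)
  assume "\<not> norm g \<le> L"
  then have gt: "norm g > L" by simp
  have L0: "0 \<le> L" using L by (simp add: lipschitz_on_def)
  then have g0: "norm g > 0" using gt by linarith
  define e where "e = (norm g - L) / 2"
  have e0: "e > 0" using gt by (simp add: e_def)
  obtain dd where dd: "dd > 0" "\<And>y. norm (y - x) < dd \<Longrightarrow> \<bar>f y - f x - g \<bullet> (y - x)\<bar> \<le> e * norm (y - x)"
    using d e0 unfolding has_derivative_at_alt by (metis real_norm_def)
  define t where "t = dd / (2 * norm g)"
  have t0: "t > 0" using dd g0 by (simp add: t_def)
  define y where "y = x + t *\<^sub>R g"
  have ny: "norm (y - x) = t * norm g" using t0 by (simp add: y_def)
  have "t * norm g = dd / 2" using g0 by (simp add: t_def)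
  then have "norm (y - x) < dd" using ny dd by simp
  then have 1: "\<bar>f y - f x - g \<bullet> (y - x)\<bar> \<le> e * (t * norm g)" using dd(2) ny by metis
  have 2: "\<bar>f y - f x\<bar> \<le> L * (t * norm g)"
    using L ny unfolding lipschitz_on_def by (metis UNIV_I dist_norm dist_real_def)
  have 3: "g \<bullet> (y - x) = t * (norm g * norm g)" by (simp add: y_def power2_norm_eq_inner[symmetric] power2_eq_square)
  have "t * (norm g * norm g) \<le> (L + e) * (t * norm g)" using 1 2 3 by (simp add: algebra_simps)
  then have "norm g * (t * norm g) \<le> (L + e) * (t * norm g)" by (simp add: algebra_simps)
  then have "norm g \<le> L + e" using t0 g0 by (simp add: mult_le_cancel_right)
  then show False using gt by (simp add: e_def field_simps)
qed

lemma seg_bound: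
  fixes f :: "'a::euclidean_space \<Rightarrow> real"
  assumes d: "\<And>p. p \<in> closed_segment a b \<Longrightarrow> (f has_derivative (\<lambda>u. Df p \<bullet> u)) (at p)"
    and B: "\<And>p. p \<in> closed_segment a b \<Longrightarrow> norm (Df p - c) \<le> B"
  shows "\<bar>f b - f a - c \<bullet> (b - a)\<bar> \<le> B * norm (b - a)"
proof -
  let ?g = "\<lambda>p. f p - c \<bullet> p"
  have dg: "(?g has_derivative (\<lambda>u. (Df p - c) \<bullet> u)) (at p within closed_segment a b)"
    if "p \<in> closed_segment a b" for p
  proof -
    have "(?g has_derivative (\<lambda>u. Df p \<bullet> u - c \<bullet> u)) (at p)"
      by (intro has_derivative_diff d that bounded_linear.has_derivative[OF bounded_linear_inner_right] has_derivative_ident)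
    then show ?thesis by (auto intro: has_derivative_at_withinI simp: inner_diff_left)
  qed
  have on: "onorm (\<lambda>u. (Df p - c) \<bullet> u) \<le> B" if "p \<in> closed_segment a b" for p
  proof (rule onorm_le)
    fix u
    have "norm ((Df p - c) \<bullet> u) \<le> norm (Df p - c) * norm u"
      by (simp add: Cauchy_Schwarz_ineq2)
    also have "\<dots> \<le> B * norm u" using B[OF that] by (simp add: mult_right_mono)
    finally show "norm ((Df p - c) \<bullet> u) \<le> B * norm u" .
  qed
  have "norm (?g b - ?g a) \<le> B * norm (b - a)"
    by (rule differentiable_bound[OF convex_closed_segment dg on]) auto
  then show ?thesis by (simp add: inner_diff_right algebra_simps)
qed

lemma bor_leb: "f \<in> borel_measurable borel \<Longrightarrow> f \<in> borel_measurable lebesgue"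
  by (rule measurable_completion) simp



locale Wk =
  fixes W :: "'a::euclidean_space \<Rightarrow> real" and LW :: real
  assumes Wlip: "LW-lipschitz_on UNIV W"
    and Wd: "\<forall>x. x \<noteq> 0 \<longrightarrow> W differentiable (at x)"
    and Wc: "continuous_on (- {0}) (grad W)"
begin

definition "CW = max LW (norm (grad W 0))"

lemma LW0: "0 \<le> LW" using Wlip by (simp add: lipschitz_on_def)

lemma gW_bound: "norm (grad W z) \<le> CW"
proof (cases "z = 0")
  case True then show ?thesis by (simp add: CW_def)
next
  case False
  then have "norm (grad W z) \<le> LW" using lip_grad_bound[OF Wlip grad_hasderiv] Wd by blast
  then show ?thesis by (simp add: CW_def)
qed

lemma W_hasderiv: "z \<noteq> 0 \<Longrightarrow> (W has_derivative (\<lambda>u. grad W z \<bullet> u)) (at z)"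
  using Wd grad_hasderiv by blast

lemma Wcont: "continuous_on UNIV W"
  using lipschitz_on_continuous_on[OF Wlip] .

lemma W_lipb: "\<bar>W a - W b\<bar> \<le> LW * norm (a - b)"
  using Wlip unfolding lipschitz_on_def by (metis UNIV_I dist_norm dist_real_def)

lemma gW_meas: "grad W \<in> borel_measurable borel"
proof -
  have "(\<lambda>x. if x \<in> - {0} then grad W x else grad W 0) \<in> borel_measurable borel"
    by (rule borel_measurable_continuous_on_if) (auto intro: Wc)
  moreover have "(\<lambda>x. if x \<in> - {0} then grad W x else grad W 0) = grad W" by auto
  ultimately show ?thesis by simp
qed

lemma W_crude: "\<bar>W (z + u) - W z - grad W z' \<bullet> u\<bar> \<le> (LW + CW) * norm u"
proof -
  have "\<bar>W (z + u) - W z\<bar> \<le> LW * norm u" using W_lipb[of "z+u" z] by simp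
  moreover have "\<bar>grad W z' \<bullet> u\<bar> \<le> CW * norm u"
  proof -
    have "norm (grad W z') * norm u \<le> CW * norm u" by (rule mult_right_mono[OF gW_bound norm_ge_zero])
    then show ?thesis using Cauchy_Schwarz_ineq2[of "grad W z'" u] by linarith
  qed
  ultimately show ?thesis by (simp add: algebra_simps)
qed

lemma W_far:
  assumes s: "s > 0" and e: "e > 0"
  shows "\<exists>\<delta>>0. \<forall>z u w. s \<le> norm z \<longrightarrow> norm z \<le> R \<longrightarrow> norm u \<le> \<delta> \<longrightarrow> norm w \<le> \<delta> \<longrightarrow>
     \<bar>W (z + u) - W z - grad W (z + w) \<bullet> u\<bar> \<le> e * norm u \<and> norm (grad W (z + w) - grad W z) \<le> e"
proof -
  define A where "A = cball (0::'a) (R + 1) - ball 0 (s / 2)"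
  have cA: "compact A" unfolding A_def by (intro compact_diff) auto
  have A0: "A \<subseteq> - {0}" using s by (auto simp: A_def)
  have "uniformly_continuous_on A (grad W)"
    by (rule compact_uniformly_continuous[OF continuous_on_subset[OF Wc A0] cA])
  then obtain d where d: "d > 0" "\<And>x x'. x \<in> A \<Longrightarrow> x' \<in> A \<Longrightarrow> dist x' x < d \<Longrightarrow> dist (grad W x') (grad W x) < e"
    using e unfolding uniformly_continuous_on_def by metis
  define \<delta> where "\<delta> = min (d / 3) (min (s / 4) (1 / 2))"
  have \<delta>0: "\<delta> > 0" using d s by (simp add: \<delta>_def)
  have inA: "p \<in> A" if "s \<le> norm z" "norm z \<le> R" "norm (p - z) \<le> 2 * \<delta>" for p z
  proof -
    have "norm p \<ge> norm z - norm (p - z)" using norm_triangle_ineq2[of z p] by (simp add: norm_minus_commute)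
    moreover have "norm p \<le> norm z + norm (p - z)" by (rule norm_triangle_sub)
    moreover have "2 * \<delta> \<le> s / 2" "2 * \<delta> \<le> 1" by (auto simp: \<delta>_def)
    ultimately show ?thesis using that by (auto simp: A_def dist_norm)
  qed
  have "\<forall>z u w. s \<le> norm z \<longrightarrow> norm z \<le> R \<longrightarrow> norm u \<le> \<delta> \<longrightarrow> norm w \<le> \<delta> \<longrightarrow>
     \<bar>W (z + u) - W z - grad W (z + w) \<bullet> u\<bar> \<le> e * norm u \<and> norm (grad W (z + w) - grad W z) \<le> e"
  proof (intro allI impI conjI)
    fix z u w :: 'a
    assume z1: "s \<le> norm z" and z2: "norm z \<le> R" and u: "norm u \<le> \<delta>" and w: "norm w \<le> \<delta>"
    have zw: "z + w \<in> A" using inA[OF z1 z2, of "z + w"] w \<delta>0 by simp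
    have zA: "z \<in> A" using inA[OF z1 z2, of z] \<delta>0 by simp
    have segA: "p \<in> A" and segd: "dist p (z + w) < d" if "p \<in> closed_segment z (z + u)" for p
    proof -
      have "dist p z \<le> dist z (z + u)" using dist_in_closed_segment[OF that] by simp
      then have pz: "norm (p - z) \<le> norm u" by (simp add: dist_norm)
      have "norm (p - z) \<le> 2 * \<delta>" using pz u \<delta>0 by linarith
      then show "p \<in> A" using inA[OF z1 z2, of p] by simp
      have "norm (p - (z + w)) \<le> norm (p - z) + norm w"
        using norm_triangle_ineq4[of "p - z" w] by (simp add: algebra_simps)
      also have "\<dots> \<le> 2 * \<delta>" using pz u w by simp
      also have "\<dots> < d" using d \<delta>0 by (simp add: \<delta>_def)
      finally show "dist p (z + w) < d" by (simp add: dist_norm)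
    qed
    have "\<bar>W (z + u) - W z - grad W (z + w) \<bullet> (z + u - z)\<bar> \<le> e * norm (z + u - z)"
    proof (rule seg_bound)
      fix p assume p: "p \<in> closed_segment z (z + u)"
      have "p \<noteq> 0" using segA[OF p] A0 by auto
      then show "(W has_derivative (\<lambda>v. grad W p \<bullet> v)) (at p)" by (rule W_hasderiv)
      show "norm (grad W p - grad W (z + w)) \<le> e"
        using d(2)[OF zw segA[OF p] segd[OF p]] by (simp add: dist_norm)
    qed
    then show "\<bar>W (z + u) - W z - grad W (z + w) \<bullet> u\<bar> \<le> e * norm u" by simp
    have "dist (z + w) z < d" using w \<delta>0 d by (simp add: dist_norm \<delta>_def)
    then show "norm (grad W (z + w) - grad W z) \<le> e"
      using d(2)[OF zA zw] by (simp add: dist_norm)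
  qed
  then show ?thesis using \<delta>0 by blast
qed

end


lemma meas_fin: assumes "0 < measure M A" shows "emeasure M A < \<infinity>"
proof (rule ccontr)
  assume "\<not> emeasure M A < \<infinity>"
  then have "emeasure M A = top" by (metis infinity_ennreal_def top.not_eq_extremum)
  then have "measure M A = 0" by (rule measure_zero_top)
  with assms show False by simp
qed

lemma set_bound:
  fixes f :: "'x \<Rightarrow> 'b::{banach,second_countable_topology}"
  assumes A: "A \<in> sets M" "emeasure M A < \<infinity>" and f: "set_integrable M A f"
    and B: "\<And>x. x \<in> A \<Longrightarrow> norm (f x) \<le> B"
  shows "norm (set_lebesgue_integral M A f) \<le> B * measure M A"
proof -
  have "norm (set_lebesgue_integral M A f) \<le> (\<integral>x. norm (indicator A x *\<^sub>R f x) \<partial>M)"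
    unfolding set_lebesgue_integral_def by (rule integral_norm_bound)
  also have "\<dots> \<le> (\<integral>x. B * indicator A x \<partial>M)"
  proof (rule integral_mono)
    show "integrable M (\<lambda>x. norm (indicator A x *\<^sub>R f x))" using integrable_norm[OF f[unfolded set_integrable_def]] .
    show "integrable M (\<lambda>x. B * indicator A x)" using A by simp
    fix x show "norm (indicator A x *\<^sub>R f x) \<le> B * indicator A x"
      using B[of x] by (cases "x \<in> A") auto
  qed
  also have "\<dots> = B * measure M A" using A by (simp add: Int_absorb2 sets.sets_into_space)
  finally show ?thesis .
qed

lemma set_integrable_bdd:
  fixes f :: "'x \<Rightarrow> 'b::{banach,second_countable_topology}"
  assumes "A \<in> sets M" "emeasure M A < \<infinity>" "f \<in> borel_measurable M" "\<And>x. x \<in> A \<Longrightarrow> norm (f x) \<le> B"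
  shows "set_integrable M A f"
  unfolding set_integrable_def using assms by (intro integrableI_bounded_set_indicator[where B=B]) auto

lemma avg_aux:
  fixes m q I B :: real
  assumes "\<bar>m * q - I\<bar> \<le> B * m" "0 < m"
  shows "\<bar>q - (1 / m) * I\<bar> \<le> B"
proof -
  have "q - (1 / m) * I = (m * q - I) / m" using assms(2) by (simp add: field_simps)
  then have "\<bar>q - (1 / m) * I\<bar> = \<bar>m * q - I\<bar> / m" using assms(2) by simp
  also have "\<dots> \<le> B * m / m" using assms by (intro divide_right_mono) auto
  also have "\<dots> = B" using assms(2) by simp
  finally show ?thesis .
qed

lemma avg_close:
  fixes G :: "'x \<Rightarrow> 'b::euclidean_space"
  assumes A: "A \<in> sets M" and pos: "0 < measure M A" and Gm: "G \<in> borel_measurable M"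
    and Gb: "bounded (G ` A)" and close: "\<And>x. x \<in> A \<Longrightarrow> \<bar>q - G x \<bullet> d\<bar> \<le> B"
  shows "\<bar>q - ((1 / measure M A) *\<^sub>R set_lebesgue_integral M A G) \<bullet> d\<bar> \<le> B"
proof -
  have fin: "emeasure M A < \<infinity>" using meas_fin[OF pos] .
  obtain Bd where Bd: "\<And>x. x \<in> A \<Longrightarrow> norm (G x) \<le> Bd" using Gb unfolding bounded_iff by auto
  have Gi: "set_integrable M A G" by (rule set_integrable_bdd[OF A fin Gm Bd])
  let ?m = "measure M A"
  have "set_lebesgue_integral M A G \<bullet> d = set_lebesgue_integral M A (\<lambda>x. G x \<bullet> d)"
    using Gi unfolding set_lebesgue_integral_def set_integrable_def
    by (subst integral_inner_left[symmetric]) auto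
  have i1: "set_integrable M A (\<lambda>x. G x \<bullet> d)"
  proof -
    have "integrable M (\<lambda>x. (indicator A x *\<^sub>R G x) \<bullet> d)"
      using Gi unfolding set_integrable_def by (rule integrable_inner_left)
    then show ?thesis unfolding set_integrable_def by simp
  qed
  have i2: "set_integrable M A (\<lambda>x. q)" using A fin by (intro set_integrable_bdd[where B="\<bar>q\<bar>"]) auto
  have eq: "set_lebesgue_integral M A (\<lambda>x. q - G x \<bullet> d) = ?m * q - set_lebesgue_integral M A (\<lambda>x. G x \<bullet> d)"
  proof -
    have fin': "emeasure M A \<noteq> \<infinity>" using fin by auto
    have "set_lebesgue_integral M A (\<lambda>x. q) = ?m * q" using set_integral_const[OF A fin', of q] by simp
    then show ?thesis using set_integral_diff(2)[OF i2 i1] by simp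
  qed
  have "\<bar>set_lebesgue_integral M A (\<lambda>x. q - G x \<bullet> d)\<bar> \<le> B * ?m"
    using set_bound[OF A fin set_integral_diff(1)[OF i2 i1], of B] close by simp
  then have "\<bar>?m * q - set_lebesgue_integral M A (\<lambda>x. G x \<bullet> d)\<bar> \<le> B * ?m" using eq by simp
  then have "\<bar>q - (1 / ?m) * set_lebesgue_integral M A (\<lambda>x. G x \<bullet> d)\<bar> \<le> B"
    using pos by (rule avg_aux)
  then show ?thesis using \<open>set_lebesgue_integral M A G \<bullet> d = _\<close> by simp
qed



lemma set_int_inner:
  fixes G :: "'x \<Rightarrow> 'b::euclidean_space"
  assumes Gi: "set_integrable M A G"
  shows "set_integrable M A (\<lambda>x. G x \<bullet> d)"
    and "set_lebesgue_integral M A G \<bullet> d = set_lebesgue_integral M A (\<lambda>x. G x \<bullet> d)"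
proof -
  have "integrable M (\<lambda>x. (indicator A x *\<^sub>R G x) \<bullet> d)"
    using Gi unfolding set_integrable_def by (rule integrable_inner_left)
  then show "set_integrable M A (\<lambda>x. G x \<bullet> d)" unfolding set_integrable_def by simp
  show "set_lebesgue_integral M A G \<bullet> d = set_lebesgue_integral M A (\<lambda>x. G x \<bullet> d)"
    using Gi unfolding set_lebesgue_integral_def set_integrable_def
    by (subst integral_inner_left[symmetric]) auto
qed

lemma nf_int:
  fixes e :: "'a::euclidean_space \<Rightarrow> 'b::{banach,second_countable_topology}"
  assumes M: "M \<in> lmeasurable" and em: "e \<in> borel_measurable lebesgue"
    and A: "\<And>y. norm (e y) \<le> A"
    and far: "\<And>y. y \<in> M \<Longrightarrow> y \<notin> ball x s \<Longrightarrow> norm (e y) \<le> \<epsilon>" and e0: "0 \<le> \<epsilon>"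
  shows "norm (set_lebesgue_integral lebesgue M e) \<le> \<epsilon> * measure lebesgue M + A * measure lebesgue (ball x s)"
proof -
  have Mi: "M \<in> sets lebesgue" "emeasure lebesgue M < \<infinity>" using M by (auto simp: fmeasurable_def)
  have Bi: "ball x s \<in> sets lebesgue" "emeasure lebesgue (ball x s) < \<infinity>"
    using lmeasurable_ball[of x s] by (auto simp: fmeasurable_def)
  have ei: "set_integrable lebesgue M e" by (rule set_integrable_bdd[OF Mi em A])
  have "norm (set_lebesgue_integral lebesgue M e) \<le> (\<integral>y. norm (indicator M y *\<^sub>R e y) \<partial>lebesgue)"
    unfolding set_lebesgue_integral_def by (rule integral_norm_bound)
  also have "\<dots> \<le> (\<integral>y. \<epsilon> * indicator M y + A * indicator (ball x s) y \<partial>lebesgue)"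
  proof (rule integral_mono)
    show "integrable lebesgue (\<lambda>y. norm (indicator M y *\<^sub>R e y))"
      using integrable_norm[OF ei[unfolded set_integrable_def]] .
    show "integrable lebesgue (\<lambda>y. \<epsilon> * indicator M y + A * indicator (ball x s) y)"
      using Mi Bi by auto
    fix y
    have A0: "0 \<le> A" using A[of y] norm_ge_zero order_trans by blast
    show "norm (indicator M y *\<^sub>R e y) \<le> \<epsilon> * indicator M y + A * indicator (ball x s) y"
    proof (cases "y \<in> M")
      case True
      show ?thesis
      proof (cases "y \<in> ball x s")
        case True
        then show ?thesis using \<open>y \<in> M\<close> A[of y] e0 by simp
      next
        case False
        then show ?thesis using \<open>y \<in> M\<close> far[of y] A0 by simp
      qed
    next
      case False
      then show ?thesis using A0 by (simp add: indicator_def)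
    qed
  qed
  also have "\<dots> = \<epsilon> * measure lebesgue M + A * measure lebesgue (ball x s)"
  proof -
    have i1: "integrable lebesgue (\<lambda>y. \<epsilon> * indicator M y)" and i2: "integrable lebesgue (\<lambda>y. A * indicator (ball x s) y)"
      using Mi Bi by auto
    show ?thesis using Mi Bi by (simp add: Bochner_Integration.integral_add[OF i1 i2])
  qed
  finally show ?thesis .
qed

lemma ball_small:
  assumes "\<eta> > 0"
  shows "\<exists>s>0. \<forall>x::'a::euclidean_space. measure lebesgue (ball x s) \<le> \<eta>"
proof -
  define U where "U = measure lborel (ball (0::'a) 1)"
  have U0: "U \<ge> 0" by (simp add: U_def)
  define s where "s = min 1 (\<eta> / (U + 1))"
  have s0: "s > 0" using assms U0 by (simp add: s_def)
  have s1: "s \<le> 1" by (simp add: s_def)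
  have "\<forall>x::'a. measure lebesgue (ball x s) \<le> \<eta>"
  proof
    fix x :: 'a
    have "measure lebesgue (ball x s) = measure lborel (ball x s)" by simp
    also have "\<dots> = s ^ DIM('a) * U" using content_ball_conv_unit_ball[of s x] s0 by (simp add: U_def)
    also have "\<dots> \<le> s ^ 1 * U"
      by (rule mult_right_mono[OF power_decreasing U0]) (use s0 s1 DIM_positive in auto)
    also have "\<dots> \<le> \<eta> / (U + 1) * U" using U0 by (intro mult_right_mono) (auto simp: s_def)
    also have "\<dots> \<le> \<eta>" using U0 assms by (simp add: field_simps)
    finally show "measure lebesgue (ball x s) \<le> \<eta>" .
  qed
  then show ?thesis using s0 by blast
qed

context Wk
begin

definition "FM M x = set_lebesgue_integral lebesgue M (\<lambda>y. W (x - y))"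
definition "GM M x = set_lebesgue_integral lebesgue M (\<lambda>y. grad W (x - y))"

lemma W_meas[measurable]: "W \<in> borel_measurable borel"
  using borel_measurable_continuous_onI[OF Wcont] .

lemma gW_meas'[measurable]: "grad W \<in> borel_measurable borel" using gW_meas .

lemma Wx_int:
  assumes M: "M \<in> lmeasurable" "bounded M"
  shows "set_integrable lebesgue M (\<lambda>y. W (x - y))"
proof -
  obtain B0 where B0: "\<And>y. y \<in> M \<Longrightarrow> norm y \<le> B0" using M(2) unfolding bounded_iff by auto
  have "(\<lambda>y. W (x - y)) \<in> borel_measurable borel" by measurable
  then have m: "(\<lambda>y. W (x - y)) \<in> borel_measurable lebesgue" by (rule bor_leb)
  show ?thesis
  proof (rule set_integrable_bdd[OF _ _ m])
    show "M \<in> sets lebesgue" "emeasure lebesgue M < \<infinity>" using M by (auto simp: fmeasurable_def)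
    fix y assume y: "y \<in> M"
    have "\<bar>W (x - y) - W 0\<bar> \<le> LW * norm (x - y)" using W_lipb[of "x - y" 0] by simp
    moreover have "norm (x - y) \<le> norm x + B0" using B0[OF y] norm_triangle_ineq4[of x y] by linarith
    ultimately have "\<bar>W (x - y)\<bar> \<le> \<bar>W 0\<bar> + LW * (norm x + B0)"
      using LW0 mult_left_mono[of "norm (x - y)" "norm x + B0" LW] by linarith
    then show "norm (W (x - y)) \<le> \<bar>W 0\<bar> + LW * (norm x + B0)" by simp
  qed
qed

lemma gWx_meas: "(\<lambda>y. grad W (x - y)) \<in> borel_measurable lebesgue"
proof -
  have "(\<lambda>y. grad W (x - y)) \<in> borel_measurable borel" by measurable
  then show ?thesis by (rule bor_leb)
qed

lemma gWx_int:
  assumes M: "M \<in> lmeasurable"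
  shows "set_integrable lebesgue M (\<lambda>y. grad W (x - y))"
  by (rule set_integrable_bdd[OF _ _ gWx_meas gW_bound]) (use M in \<open>auto simp: fmeasurable_def\<close>)

end


context Wk
begin

lemma CW0: "0 \<le> CW" using LW0 by (simp add: CW_def)

lemma FM_deriv:
  assumes M: "M \<in> lmeasurable" "bounded M"
  shows "(FM M has_derivative (\<lambda>u. GM M x \<bullet> u)) (at x)"
  unfolding has_derivative_at_alt
proof (intro conjI allI impI)
  show "bounded_linear (\<lambda>u. GM M x \<bullet> u)" by (rule bounded_linear_inner_right)
  fix e :: real assume e: "e > 0"
  define \<Lambda> where "\<Lambda> = LW + CW + 1"
  have \<Lambda>0: "\<Lambda> > 0" using LW0 CW0 by (simp add: \<Lambda>_def)
  obtain s where s: "s > 0" "\<And>z::'a. measure lebesgue (ball z s) \<le> e / (2 * \<Lambda>)"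
    using ball_small[of "e / (2 * \<Lambda>)"] e \<Lambda>0 by auto
  obtain B0 where B0: "\<And>y. y \<in> M \<Longrightarrow> norm y \<le> B0" using M(2) unfolding bounded_iff by auto
  define m where "m = measure lebesgue M"
  have m0: "m \<ge> 0" by (simp add: m_def)
  define e1 where "e1 = e / (2 * (m + 1))"
  have e1: "e1 > 0" using e m0 by (simp add: e1_def)
  obtain \<delta> where \<delta>: "\<delta> > 0" and far: "\<And>z u w. s \<le> norm z \<Longrightarrow> norm z \<le> norm x + B0 \<Longrightarrow> norm u \<le> \<delta> \<Longrightarrow> norm w \<le> \<delta> \<Longrightarrow>
     \<bar>W (z + u) - W z - grad W (z + w) \<bullet> u\<bar> \<le> e1 * norm u \<and> norm (grad W (z + w) - grad W z) \<le> e1"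
    using W_far[OF s(1) e1, of "norm x + B0"] by blast
  show "\<exists>d>0. \<forall>y. norm (y - x) < d \<longrightarrow> norm (FM M y - FM M x - GM M x \<bullet> (y - x)) \<le> e * norm (y - x)"
  proof (intro exI[of _ \<delta>] conjI allI impI)
    show "\<delta> > 0" by (rule \<delta>)
    fix y assume yx: "norm (y - x) < \<delta>"
    define u where "u = y - x"
    have i1: "set_integrable lebesgue M (\<lambda>t. W (y - t))" using Wx_int[OF M] .
    have i2: "set_integrable lebesgue M (\<lambda>t. W (x - t))" using Wx_int[OF M] .
    have i3: "set_integrable lebesgue M (\<lambda>t. grad W (x - t))" using gWx_int[OF M(1)] .
    have eq: "FM M y - FM M x - GM M x \<bullet> u =
      set_lebesgue_integral lebesgue M (\<lambda>t. W (y - t) - W (x - t) - grad W (x - t) \<bullet> u)"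
      unfolding FM_def GM_def
      by (simp add: set_int_inner(2)[OF i3] set_integral_diff(2)[OF set_integral_diff(1)[OF i1 i2] set_int_inner(1)[OF i3]]
                    set_integral_diff(2)[OF i1 i2])
    have meas: "(\<lambda>t. W (y - t) - W (x - t) - grad W (x - t) \<bullet> u) \<in> borel_measurable lebesgue"
      by (rule bor_leb) measurable
    have bnd: "norm (set_lebesgue_integral lebesgue M (\<lambda>t. W (y - t) - W (x - t) - grad W (x - t) \<bullet> u))
       \<le> (e1 * norm u) * m + ((LW + CW) * norm u) * measure lebesgue (ball x s)"
      unfolding m_def
    proof (rule nf_int[OF M(1) meas])
      fix t
      have yt: "y - t = (x - t) + u" by (simp add: u_def)
      show "norm (W (y - t) - W (x - t) - grad W (x - t) \<bullet> u) \<le> (LW + CW) * norm u"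
        unfolding yt using W_crude[of "x - t" u "x - t"] by simp
    next
      fix t assume t: "t \<in> M" "t \<notin> ball x s"
      have "s \<le> norm (x - t)" using t(2) by (simp add: dist_norm)
      moreover have "norm (x - t) \<le> norm x + B0" using B0[OF t(1)] norm_triangle_ineq4[of x t] by linarith
      moreover have "y - t = (x - t) + u" by (simp add: u_def)
      ultimately show "norm (W (y - t) - W (x - t) - grad W (x - t) \<bullet> u) \<le> e1 * norm u"
        using far[of "x - t" u 0] yx \<delta> by (simp add: u_def)
    next
      show "0 \<le> e1 * norm u" using e1 by simp
    qed
    have a1: "e1 * m \<le> e / 2" using e m0 by (simp add: e1_def field_simps)
    have a2: "(LW + CW) * measure lebesgue (ball x s) \<le> e / 2"
    proof -
      have "(LW + CW) * measure lebesgue (ball x s) \<le> \<Lambda> * (e / (2 * \<Lambda>))"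
        using s(2)[of x] LW0 CW0 by (intro mult_mono) (auto simp: \<Lambda>_def)
      also have "\<dots> = e / 2" using \<Lambda>0 by simp
      finally show ?thesis .
    qed
    have "(e1 * norm u) * m + ((LW + CW) * norm u) * measure lebesgue (ball x s)
        = norm u * (e1 * m + (LW + CW) * measure lebesgue (ball x s))" by (simp add: algebra_simps)
    also have "\<dots> \<le> norm u * e" using a1 a2 by (intro mult_left_mono) auto
    finally show "norm (FM M y - FM M x - GM M x \<bullet> (y - x)) \<le> e * norm (y - x)"
      using eq bnd by (simp add: u_def mult.commute)
  qed
qed

lemma GM_cont:
  assumes M: "M \<in> lmeasurable" "bounded M"
  shows "continuous_on UNIV (GM M)"
  unfolding continuous_on_iff
proof (intro ballI allI impI)
  fix x :: 'a and e :: real assume e: "e > 0"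
  define \<Lambda> where "\<Lambda> = 2 * CW + 1"
  have \<Lambda>0: "\<Lambda> > 0" using CW0 by (simp add: \<Lambda>_def)
  obtain s where s: "s > 0" "\<And>z::'a. measure lebesgue (ball z s) \<le> e / (4 * \<Lambda>)"
    using ball_small[of "e / (4 * \<Lambda>)"] e \<Lambda>0 by auto
  obtain B0 where B0: "\<And>y. y \<in> M \<Longrightarrow> norm y \<le> B0" using M(2) unfolding bounded_iff by auto
  define m where "m = measure lebesgue M"
  have m0: "m \<ge> 0" by (simp add: m_def)
  define e1 where "e1 = e / (4 * (m + 1))"
  have e1: "e1 > 0" using e m0 by (simp add: e1_def)
  obtain \<delta> where \<delta>: "\<delta> > 0" and far: "\<And>z u w. s \<le> norm z \<Longrightarrow> norm z \<le> norm x + B0 \<Longrightarrow> norm u \<le> \<delta> \<Longrightarrow> norm w \<le> \<delta> \<Longrightarrow>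
     \<bar>W (z + u) - W z - grad W (z + w) \<bullet> u\<bar> \<le> e1 * norm u \<and> norm (grad W (z + w) - grad W z) \<le> e1"
    using W_far[OF s(1) e1, of "norm x + B0"] by blast
  show "\<exists>d>0. \<forall>x'\<in>UNIV. dist x' x < d \<longrightarrow> dist (GM M x') (GM M x) < e"
  proof (intro exI[of _ \<delta>] conjI ballI impI)
    show "\<delta> > 0" by (rule \<delta>)
    fix y assume yx: "dist y x < \<delta>"
    define w where "w = y - x"
    have i1: "set_integrable lebesgue M (\<lambda>t. grad W (y - t))" using gWx_int[OF M(1)] .
    have i2: "set_integrable lebesgue M (\<lambda>t. grad W (x - t))" using gWx_int[OF M(1)] .
    have eq: "GM M y - GM M x = set_lebesgue_integral lebesgue M (\<lambda>t. grad W (y - t) - grad W (x - t))"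
      unfolding GM_def by (simp add: set_integral_diff(2)[OF i1 i2])
    have meas: "(\<lambda>t. grad W (y - t) - grad W (x - t)) \<in> borel_measurable lebesgue"
      by (rule bor_leb) measurable
    have bnd: "norm (set_lebesgue_integral lebesgue M (\<lambda>t. grad W (y - t) - grad W (x - t)))
       \<le> e1 * m + (2 * CW) * measure lebesgue (ball x s)"
      unfolding m_def
    proof (rule nf_int[OF M(1) meas])
      fix t
      show "norm (grad W (y - t) - grad W (x - t)) \<le> 2 * CW"
        using norm_triangle_ineq4[of "grad W (y - t)" "grad W (x - t)"] gW_bound[of "y - t"] gW_bound[of "x - t"]
        by linarith
    next
      fix t assume t: "t \<in> M" "t \<notin> ball x s"
      have "s \<le> norm (x - t)" using t(2) by (simp add: dist_norm)
      moreover have "norm (x - t) \<le> norm x + B0" using B0[OF t(1)] norm_triangle_ineq4[of x t] by linarith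
      moreover have yt: "y - t = (x - t) + w" by (simp add: w_def)
      moreover have "norm w \<le> \<delta>" using yx by (simp add: w_def dist_norm)
      ultimately show "norm (grad W (y - t) - grad W (x - t)) \<le> e1"
        unfolding yt using far[of "x - t" 0 w] \<delta> by simp
    next
      show "0 \<le> e1" using e1 by simp
    qed
    have a1: "e1 * m \<le> e / 4" using e m0 by (simp add: e1_def field_simps)
    have a2: "(2 * CW) * measure lebesgue (ball x s) \<le> e / 4"
    proof -
      have "(2 * CW) * measure lebesgue (ball x s) \<le> \<Lambda> * (e / (4 * \<Lambda>))"
        using s(2)[of x] CW0 by (intro mult_mono) (auto simp: \<Lambda>_def)
      also have "\<dots> = e / 4" using \<Lambda>0 by simp
      finally show ?thesis .
    qed
    show "dist (GM M y) (GM M x) < e" using eq bnd a1 a2 e by (simp add: dist_norm)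
  qed
qed

end


context Wk
begin

lemma Q_repr:
  assumes T: "finite T" "\<And>M. M \<in> T \<Longrightarrow> M \<in> lmeasurable \<and> bounded M"
  shows "Qpot V W (rhohat T \<rho>) x = V x + (\<Sum>M\<in>T. (\<rho> M / measure lebesgue M) * FM M x)"
proof -
  have eq: "(\<lambda>y. W (x - y) * rhohat T \<rho> y) =
      (\<lambda>y. \<Sum>M\<in>T. (\<rho> M / measure lebesgue M) * (indicator M y *\<^sub>R W (x - y)))"
    by (simp add: rhohat_def sum_distrib_left algebra_simps)
  have int: "integrable lebesgue (\<lambda>y. (\<rho> M / measure lebesgue M) * (indicator M y *\<^sub>R W (x - y)))"
    if "M \<in> T" for M
    using Wx_int[of M x] T(2)[OF that] unfolding set_integrable_def by auto
  show ?thesis unfolding Qpot_def eq FM_def set_lebesgue_integral_def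
    by (simp only: Bochner_Integration.integral_sum[OF int] integral_mult_right_zero)
qed

lemma Q_deriv:
  assumes T: "finite T" "\<And>M. M \<in> T \<Longrightarrow> M \<in> lmeasurable \<and> bounded M"
    and Vd: "V differentiable (at x)"
  shows "(Qpot V W (rhohat T \<rho>) has_derivative
          (\<lambda>u. (grad V x + (\<Sum>M\<in>T. (\<rho> M / measure lebesgue M) *\<^sub>R GM M x)) \<bullet> u)) (at x)"
proof -
  have feq: "Qpot V W (rhohat T \<rho>) = (\<lambda>x. V x + (\<Sum>M\<in>T. (\<rho> M / measure lebesgue M) * FM M x))"
    using Q_repr[OF T] by auto
  have "((\<lambda>x. V x + (\<Sum>M\<in>T. (\<rho> M / measure lebesgue M) * FM M x)) has_derivative
         (\<lambda>u. grad V x \<bullet> u + (\<Sum>M\<in>T. (\<rho> M / measure lebesgue M) * (GM M x \<bullet> u)))) (at x)"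
    using T(2) by (intro has_derivative_add grad_hasderiv[OF Vd] has_derivative_sum
        has_derivative_mult_right FM_deriv) auto
  then show ?thesis unfolding feq
    by (rule has_derivative_eq_rhs) (simp add: inner_add_left inner_sum_left)
qed

lemma Q_grad:
  assumes T: "finite T" "\<And>M. M \<in> T \<Longrightarrow> M \<in> lmeasurable \<and> bounded M"
    and Vd: "V differentiable (at x)"
  shows "grad (Qpot V W (rhohat T \<rho>)) x = grad V x + (\<Sum>M\<in>T. (\<rho> M / measure lebesgue M) *\<^sub>R GM M x)"
  by (rule grad_eq[OF Q_deriv[OF T Vd]])

lemma Q_grad_cont:
  assumes T: "finite T" "\<And>M. M \<in> T \<Longrightarrow> M \<in> lmeasurable \<and> bounded M"
    and Vc: "continuous_on UNIV (grad V)"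
  shows "continuous_on UNIV (\<lambda>x. grad V x + (\<Sum>M\<in>T. (\<rho> M / measure lebesgue M) *\<^sub>R GM M x))"
  using T(2) by (intro continuous_on_add Vc continuous_on_sum continuous_on_scaleR continuous_on_const GM_cont) auto

end


lemma sum_ind_in:
  assumes "finite T" "M \<in> T" "x \<in> M" "\<And>K L. K \<in> T \<Longrightarrow> L \<in> T \<Longrightarrow> K \<noteq> L \<Longrightarrow> K \<inter> L = {}"
  shows "(\<Sum>K\<in>T. f K * indicator K x) = (f M :: real)"
proof -
  have "(\<Sum>K\<in>T. f K * indicator K x) = f M * indicator M x + (\<Sum>K\<in>T - {M}. f K * indicator K x)"
    by (rule sum.remove[OF assms(1,2)])
  also have "(\<Sum>K\<in>T - {M}. f K * indicator K x) = 0"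
  proof (rule sum.neutral, rule ballI)
    fix K assume K: "K \<in> T - {M}"
    then have "x \<notin> K" using assms(4)[of K M] assms(2,3) by auto
    then show "f K * indicator K x = 0" by simp
  qed
  finally show ?thesis using assms(3) by simp
qed

lemma sum_ind_out:
  assumes "\<And>K. K \<in> T \<Longrightarrow> x \<notin> K"
  shows "(\<Sum>K\<in>T. f K * indicator K x) = (0::real)"
  using assms by (intro sum.neutral) auto

lemma phi_nonneg: "0 \<le> s \<Longrightarrow> 0 \<le> phi_ent s"
proof (cases "s = 0")
  case True then show ?thesis by (simp add: phi_ent_def)
next
  case False
  assume s: "0 \<le> s"
  then have s0: "s > 0" using False by simp
  have "ln (1 / s) \<le> 1 / s - 1" using s0 by (intro ln_le_minus_one) simp
  then have "- ln s \<le> 1 / s - 1" using s0 by (simp add: ln_div)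
  then have "s * (- ln s) \<le> s * (1 / s - 1)" using s0 by (intro mult_left_mono) auto
  then have "- (s * ln s) \<le> 1 - s" using s0 by (simp add: algebra_simps)
  then show ?thesis using False by (simp add: phi_ent_def)
qed

lemma phi_aux:
  assumes s: "0 \<le> s" and m: "0 < m" and a: "1 < a"
  shows "s * m \<le> exp a * m + m * phi_ent s / (a - 1)"
proof (cases "s \<le> exp a")
  case True
  have "s * m \<le> exp a * m" using True m by (simp add: mult_right_mono)
  moreover have "0 \<le> m * phi_ent s / (a - 1)" using phi_nonneg[OF s] m a by simp
  ultimately show ?thesis by linarith
next
  case False
  then have sa: "s > exp a" by simp
  then have s0: "s > 0" using exp_gt_zero[of a] by linarith
  have "ln s > a" using sa s0 by (metis ln_exp ln_less_cancel_iff exp_gt_zero)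
  then have "s * a \<le> s * ln s" using s0 by (intro mult_left_mono) auto
  then have "s * ln s - s + 1 \<ge> s * (a - 1)" by (simp add: algebra_simps)
  then have "phi_ent s \<ge> s * (a - 1)" using s0 by (simp add: phi_ent_def)
  then have "m * phi_ent s \<ge> m * (s * (a - 1))" using m by (simp add: mult_left_mono)
  then have "m * phi_ent s / (a - 1) \<ge> s * m" using a by (simp add: field_simps)
  moreover have "0 \<le> exp a * m" using m by simp
  ultimately show ?thesis by linarith
qed

lemma near_mass:
  assumes T: "finite T" and S: "S \<subseteq> T"
    and disj: "\<And>K L. K \<in> T \<Longrightarrow> L \<in> T \<Longrightarrow> K \<noteq> L \<Longrightarrow> K \<inter> L = {}"
    and cells: "\<And>M. M \<in> T \<Longrightarrow> M \<in> lmeasurable \<and> 0 < measure lebesgue M"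
    and rho: "\<And>M. M \<in> T \<Longrightarrow> 0 \<le> \<rho> M"
    and ent: "(\<Sum>M\<in>T. measure lebesgue M * phi_ent (\<rho> M / measure lebesgue M)) \<le> C"
    and a: "1 < a" and B: "B \<in> lmeasurable" and SB: "\<And>M. M \<in> S \<Longrightarrow> M \<subseteq> B"
  shows "(\<Sum>M\<in>S. \<rho> M) \<le> exp a * measure lebesgue B + C / (a - 1)"
proof -
  let ?m = "\<lambda>M. measure lebesgue M"
  let ?p = "\<lambda>M. ?m M * phi_ent (\<rho> M / ?m M)"
  have fS: "finite S" using T S finite_subset by auto
  have 1: "\<rho> M \<le> exp a * ?m M + ?p M / (a - 1)" if "M \<in> T" for M
  proof -
    have "(\<rho> M / ?m M) * ?m M \<le> exp a * ?m M + ?m M * phi_ent (\<rho> M / ?m M) / (a - 1)"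
      using phi_aux[of "\<rho> M / ?m M" "?m M" a] rho[OF that] cells[OF that] a by simp
    then show ?thesis using cells[OF that] by simp
  qed
  have pn: "0 \<le> ?p M" if "M \<in> T" for M
    using phi_nonneg[of "\<rho> M / ?m M"] rho[OF that] cells[OF that] by simp
  have "(\<Sum>M\<in>S. \<rho> M) \<le> (\<Sum>M\<in>S. exp a * ?m M + ?p M / (a - 1))"
    using S 1 by (intro sum_mono) auto
  also have "\<dots> = exp a * (\<Sum>M\<in>S. ?m M) + (\<Sum>M\<in>S. ?p M) / (a - 1)"
    by (simp add: sum.distrib sum_distrib_left sum_divide_distrib)
  also have "(\<Sum>M\<in>S. ?m M) = measure lebesgue (\<Union>M\<in>S. M)"
  proof -
    have "measure lebesgue (\<Union>M\<in>S. id M) = (\<Sum>M\<in>S. measure lebesgue (id M))"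
    proof (rule measure_finite_Union[OF fS])
      show "id ` S \<subseteq> sets lebesgue" using S cells by auto
      show "disjoint_family_on id S" using S disj unfolding disjoint_family_on_def by auto
      fix M assume "M \<in> S"
      then have "M \<in> T" using S by auto
      then show "emeasure lebesgue (id M) \<noteq> \<infinity>" using cells[of M] by (auto simp: fmeasurable_def)
    qed
    then show ?thesis by simp
  qed
  also have "measure lebesgue (\<Union>M\<in>S. M) \<le> measure lebesgue B"
  proof (rule measure_mono_fmeasurable)
    show "(\<Union>M\<in>S. M) \<subseteq> B" using SB by auto
    show "(\<Union>M\<in>S. M) \<in> sets lebesgue" using S cells fS by (intro sets.finite_UN) auto
    show "B \<in> fmeasurable lebesgue" using B .
  qed
  also have "(\<Sum>M\<in>S. ?p M) \<le> (\<Sum>M\<in>T. ?p M)"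
    using S T pn by (intro sum_mono2) auto
  also have "\<dots> \<le> C" by (rule ent)
  finally show ?thesis using a by (simp add: divide_right_mono)
qed



lemma ent_sum:
  assumes T: "finite T" and \<Omega>: "bounded \<Omega>" "open \<Omega>"
    and cells: "\<And>M. M \<in> T \<Longrightarrow> M \<subseteq> \<Omega> \<and> open M \<and> M \<in> lmeasurable \<and> 0 < measure lebesgue M"
    and disj: "\<And>K L. K \<in> T \<Longrightarrow> L \<in> T \<Longrightarrow> K \<noteq> L \<Longrightarrow> K \<inter> L = {}"
    and rho: "\<And>M. M \<in> T \<Longrightarrow> 0 \<le> \<rho> M"
    and ent: "set_lebesgue_integral lebesgue \<Omega> (\<lambda>x. phi_ent (rhohat T \<rho> x)) \<le> C"
  shows "(\<Sum>M\<in>T. measure lebesgue M * phi_ent (\<rho> M / measure lebesgue M)) \<le> C"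
proof -
  define c where "c M = \<rho> M / measure lebesgue M" for M
  have rh: "rhohat T \<rho> x = (\<Sum>M\<in>T. c M * indicator M x)" for x
    by (simp add: rhohat_def c_def)
  have Mb: "M \<in> sets borel" if "M \<in> T" for M using cells[OF that] by (simp add: borel_open)
  have rm: "rhohat T \<rho> \<in> borel_measurable borel"
    unfolding rh[abs_def]
    by (intro borel_measurable_sum borel_measurable_times borel_measurable_const borel_measurable_indicator Mb)
  have pm: "phi_ent \<in> borel_measurable borel" unfolding phi_ent_def[abs_def] by measurable
  have fm: "(\<lambda>x. phi_ent (rhohat T \<rho> x)) \<in> borel_measurable lebesgue"
    by (rule bor_leb) (rule measurable_compose[OF rm pm])
  define B\<phi> where "B\<phi> = 1 + (\<Sum>M\<in>T. \<bar>phi_ent (c M)\<bar>)"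
  have val: "(\<exists>M\<in>T. x \<in> M \<and> rhohat T \<rho> x = c M) \<or> ((\<forall>M\<in>T. x \<notin> M) \<and> rhohat T \<rho> x = 0)" for x
  proof (cases "\<exists>M\<in>T. x \<in> M")
    case True
    then obtain M where M: "M \<in> T" "x \<in> M" by auto
    then show ?thesis using sum_ind_in[OF T M disj, of c] rh[of x] by auto
  next
    case False
    then show ?thesis using sum_ind_out[of T x c] rh[of x] by auto
  qed
  have bnd: "norm (phi_ent (rhohat T \<rho> x)) \<le> B\<phi>" for x
  proof -
    have s0: "0 \<le> (\<Sum>M\<in>T. \<bar>phi_ent (c M)\<bar>)" by (simp add: sum_nonneg)
    from val[of x] show ?thesis
    proof
      assume "\<exists>M\<in>T. x \<in> M \<and> rhohat T \<rho> x = c M"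
      then obtain M where M: "M \<in> T" "rhohat T \<rho> x = c M" by auto
      have "\<bar>phi_ent (c M)\<bar> \<le> (\<Sum>M\<in>T. \<bar>phi_ent (c M)\<bar>)"
        by (rule member_le_sum[OF M(1)]) (auto simp: T)
      then show ?thesis using M by (simp add: B\<phi>_def)
    next
      assume "(\<forall>M\<in>T. x \<notin> M) \<and> rhohat T \<rho> x = 0"
      then show ?thesis using s0 by (simp add: B\<phi>_def phi_ent_def)
    qed
  qed
  have \<Omega>m: "\<Omega> \<in> lmeasurable" using \<Omega> by (rule lmeasurable_open)
  have fi: "set_integrable lebesgue \<Omega> (\<lambda>x. phi_ent (rhohat T \<rho> x))"
    by (rule set_integrable_bdd[OF _ _ fm bnd]) (use \<Omega>m in \<open>auto simp: fmeasurable_def\<close>)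
  have gi: "integrable lebesgue (\<lambda>x. phi_ent (c M) * indicator M x)" if "M \<in> T" for M
    using cells[OF that] by (auto simp: fmeasurable_def)
  have "(\<Sum>M\<in>T. measure lebesgue M * phi_ent (\<rho> M / measure lebesgue M))
      = (\<integral>x. (\<Sum>M\<in>T. phi_ent (c M) * indicator M x) \<partial>lebesgue)"
    by (simp only: Bochner_Integration.integral_sum[OF gi] integral_mult_right_zero integral_indicator)
       (simp add: c_def mult.commute)
  also have "\<dots> \<le> (\<integral>x. indicator \<Omega> x *\<^sub>R phi_ent (rhohat T \<rho> x) \<partial>lebesgue)"
  proof (rule integral_mono)
    show "integrable lebesgue (\<lambda>x. \<Sum>M\<in>T. phi_ent (c M) * indicator M x)" using gi by auto
    show "integrable lebesgue (\<lambda>x. indicator \<Omega> x *\<^sub>R phi_ent (rhohat T \<rho> x))"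
      using fi unfolding set_integrable_def .
    fix x
    from val[of x] show "(\<Sum>M\<in>T. phi_ent (c M) * indicator M x) \<le> indicator \<Omega> x *\<^sub>R phi_ent (rhohat T \<rho> x)"
    proof
      assume "\<exists>M\<in>T. x \<in> M \<and> rhohat T \<rho> x = c M"
      then obtain M where M: "M \<in> T" "x \<in> M" "rhohat T \<rho> x = c M" by auto
      have "x \<in> \<Omega>" using cells[OF M(1)] M(2) by auto
      then show ?thesis using sum_ind_in[OF T M(1,2) disj, of "\<lambda>M. phi_ent (c M)"] M(3) by simp
    next
      assume A: "(\<forall>M\<in>T. x \<notin> M) \<and> rhohat T \<rho> x = 0"
      then have "(\<Sum>M\<in>T. phi_ent (c M) * indicator M x) = 0" by (intro sum_ind_out) auto
      then show ?thesis using A by (simp add: phi_ent_def indicator_def)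
    qed
  qed
  also have "\<dots> \<le> C" using ent unfolding set_lebesgue_integral_def .
  finally show ?thesis .
qed



context Wk
begin

lemma W_cell_est:
  fixes a b x :: 'a
  assumes M: "M \<in> lmeasurable" "0 < measure lebesgue M" and rho: "0 \<le> \<rho>M"
    and pt: "\<And>y. y \<in> M \<Longrightarrow> \<bar>(W (b - xM) - W (a - xM)) - grad W (x - y) \<bullet> (b - a)\<bar> \<le> B"
  shows "\<bar>\<rho>M * (W (b - xM) - W (a - xM)) - (\<rho>M / measure lebesgue M) * (GM M x \<bullet> (b - a))\<bar> \<le> \<rho>M * B"
proof -
  let ?m = "measure lebesgue M" and ?d = "b - a" and ?\<alpha> = "W (b - xM) - W (a - xM)"
  have Ms: "M \<in> sets lebesgue" "emeasure lebesgue M < \<infinity>" using M by (auto simp: fmeasurable_def)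
  have fin': "emeasure lebesgue M \<noteq> \<infinity>" using Ms by auto
  have i3: "set_integrable lebesgue M (\<lambda>t. grad W (x - t))" using gWx_int[OF M(1)] .
  have i4: "set_integrable lebesgue M (\<lambda>t. grad W (x - t) \<bullet> ?d)" using set_int_inner(1)[OF i3] .
  have i5: "set_integrable lebesgue M (\<lambda>t. ?\<alpha>)" using Ms by (intro set_integrable_bdd[where B="\<bar>?\<alpha>\<bar>"]) auto
  have eqG: "GM M x \<bullet> ?d = set_lebesgue_integral lebesgue M (\<lambda>t. grad W (x - t) \<bullet> ?d)"
    unfolding GM_def by (rule set_int_inner(2)[OF i3])
  have eqI: "set_lebesgue_integral lebesgue M (\<lambda>t. ?\<alpha> - grad W (x - t) \<bullet> ?d) = ?m * ?\<alpha> - GM M x \<bullet> ?d"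
    using set_integral_diff(2)[OF i5 i4] set_integral_const[OF Ms(1) fin', of ?\<alpha>] eqG by simp
  have "\<bar>set_lebesgue_integral lebesgue M (\<lambda>t. ?\<alpha> - grad W (x - t) \<bullet> ?d)\<bar> \<le> B * ?m"
    using set_bound[OF Ms set_integral_diff(1)[OF i5 i4], of B] pt by simp
  then have I: "\<bar>?m * ?\<alpha> - GM M x \<bullet> ?d\<bar> \<le> B * ?m" using eqI by simp
  have "\<rho>M * ?\<alpha> - (\<rho>M / ?m) * (GM M x \<bullet> ?d) = (\<rho>M / ?m) * (?m * ?\<alpha> - GM M x \<bullet> ?d)"
    using M(2) by (simp add: field_simps)
  then have "\<bar>\<rho>M * ?\<alpha> - (\<rho>M / ?m) * (GM M x \<bullet> ?d)\<bar> = (\<rho>M / ?m) * \<bar>?m * ?\<alpha> - GM M x \<bullet> ?d\<bar>"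
    using rho M(2) by (simp add: abs_mult)
  also have "\<dots> \<le> (\<rho>M / ?m) * (B * ?m)" using I rho M(2) by (intro mult_left_mono) auto
  also have "\<dots> = \<rho>M * B" using M(2) by simp
  finally show ?thesis .
qed

lemma W_sum_est:
  fixes a b x :: 'a
  assumes T: "finite T"
    and cells: "\<And>M. M \<in> T \<Longrightarrow> M \<in> lmeasurable \<and> 0 < measure lebesgue M \<and> (\<forall>y\<in>M. norm (y - bary M) \<le> h)"
    and rho: "\<And>M. M \<in> T \<Longrightarrow> 0 \<le> \<rho> M" and sum1: "(\<Sum>M\<in>T. \<rho> M) = 1"
    and ab: "norm (b - a) \<le> 2 * h" and xa: "norm (x - a) \<le> 3 * h"
    and far: "\<And>z u w. r \<le> norm z \<Longrightarrow> norm z \<le> R \<Longrightarrow> norm u \<le> \<delta> \<Longrightarrow> norm w \<le> \<delta> \<Longrightarrow>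
                \<bar>W (z + u) - W z - grad W (z + w) \<bullet> u\<bar> \<le> \<epsilon>1 * norm u"
    and aR: "\<And>M. M \<in> T \<Longrightarrow> norm (a - bary M) \<le> R"
    and h\<delta>: "4 * h \<le> \<delta>" and e1: "0 \<le> \<epsilon>1"
  shows "\<bar>(\<Sum>M\<in>T. \<rho> M * (W (b - bary M) - W (a - bary M)))
           - (\<Sum>M\<in>T. (\<rho> M / measure lebesgue M) *\<^sub>R GM M x) \<bullet> (b - a)\<bar>
         \<le> \<epsilon>1 * norm (b - a) + (LW + CW) * norm (b - a) * (\<Sum>M\<in>{M\<in>T. norm (a - bary M) < r}. \<rho> M)"
proof -
  let ?d = "b - a" and ?\<Lambda> = "LW + CW"
  define B where "B M = (if norm (a - bary M) < r then ?\<Lambda> * norm ?d else \<epsilon>1 * norm ?d)" for M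
  have h0: "0 \<le> h" using ab norm_ge_zero[of ?d] by linarith
  have cell: "\<bar>\<rho> M * (W (b - bary M) - W (a - bary M)) - (\<rho> M / measure lebesgue M) * (GM M x \<bullet> ?d)\<bar> \<le> \<rho> M * B M"
    if MT: "M \<in> T" for M
  proof (rule W_cell_est)
    show "M \<in> lmeasurable" "0 < measure lebesgue M" "0 \<le> \<rho> M" using cells[OF MT] rho[OF MT] by auto
    fix y assume y: "y \<in> M"
    have zb: "(a - bary M) + ?d = b - bary M" by simp
    show "\<bar>W (b - bary M) - W (a - bary M) - grad W (x - y) \<bullet> ?d\<bar> \<le> B M"
    proof (cases "norm (a - bary M) < r")
      case True
      then show ?thesis using W_crude[of "a - bary M" ?d "x - y"] by (simp add: B_def)
    next
      case False
      define w where "w = (x - a) - (y - bary M)"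
      have zw: "(a - bary M) + w = x - y" by (simp add: w_def)
      have "norm w \<le> norm (x - a) + norm (y - bary M)" unfolding w_def by (rule norm_triangle_ineq4)
      also have "\<dots> \<le> 3 * h + h" using xa cells[OF MT] y by (intro add_mono) auto
      finally have nw: "norm w \<le> \<delta>" using h\<delta> by simp
      have nd: "norm ?d \<le> \<delta>" using ab h\<delta> h0 by simp
      have "\<bar>W ((a - bary M) + ?d) - W (a - bary M) - grad W ((a - bary M) + w) \<bullet> ?d\<bar> \<le> \<epsilon>1 * norm ?d"
        using far[OF _ aR[OF MT] nd nw] False by simp
      then show ?thesis unfolding zb zw using False by (simp add: B_def)
    qed
  qed
  have "(\<Sum>M\<in>T. (\<rho> M / measure lebesgue M) *\<^sub>R GM M x) \<bullet> ?d = (\<Sum>M\<in>T. (\<rho> M / measure lebesgue M) * (GM M x \<bullet> ?d))"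
    by (simp add: inner_sum_left)
  then have "\<bar>(\<Sum>M\<in>T. \<rho> M * (W (b - bary M) - W (a - bary M))) - (\<Sum>M\<in>T. (\<rho> M / measure lebesgue M) *\<^sub>R GM M x) \<bullet> ?d\<bar>
      = \<bar>\<Sum>M\<in>T. \<rho> M * (W (b - bary M) - W (a - bary M)) - (\<rho> M / measure lebesgue M) * (GM M x \<bullet> ?d)\<bar>"
    by (simp add: sum_subtractf)
  also have "\<dots> \<le> (\<Sum>M\<in>T. \<bar>\<rho> M * (W (b - bary M) - W (a - bary M)) - (\<rho> M / measure lebesgue M) * (GM M x \<bullet> ?d)\<bar>)"
    by (rule sum_abs)
  also have "\<dots> \<le> (\<Sum>M\<in>T. \<rho> M * B M)" using cell by (intro sum_mono) auto
  also have "\<dots> \<le> (\<Sum>M\<in>T. \<rho> M * (\<epsilon>1 * norm ?d) + \<rho> M * (if norm (a - bary M) < r then ?\<Lambda> * norm ?d else 0))"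
  proof (rule sum_mono)
    fix M assume MT: "M \<in> T"
    have "B M \<le> \<epsilon>1 * norm ?d + (if norm (a - bary M) < r then ?\<Lambda> * norm ?d else 0)"
      using e1 by (simp add: B_def)
    then show "\<rho> M * B M \<le> \<rho> M * (\<epsilon>1 * norm ?d) + \<rho> M * (if norm (a - bary M) < r then ?\<Lambda> * norm ?d else 0)"
      using rho[OF MT] by (simp add: mult_left_mono distrib_left[symmetric])
  qed
  also have "\<dots> = \<epsilon>1 * norm ?d * (\<Sum>M\<in>T. \<rho> M) + ?\<Lambda> * norm ?d * (\<Sum>M\<in>{M\<in>T. norm (a - bary M) < r}. \<rho> M)"
  proof -
    have e1: "(\<Sum>M\<in>T. \<rho> M * (\<epsilon>1 * norm ?d)) = \<epsilon>1 * norm ?d * (\<Sum>M\<in>T. \<rho> M)"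
      by (simp add: sum_distrib_right mult.commute)
    have e2: "(\<Sum>M\<in>T. \<rho> M * (if norm (a - bary M) < r then ?\<Lambda> * norm ?d else 0))
        = (\<Sum>M\<in>T. if norm (a - bary M) < r then \<rho> M * (?\<Lambda> * norm ?d) else 0)"
      by (rule sum.cong) auto
    also have "\<dots> = (\<Sum>M\<in>{M\<in>T. norm (a - bary M) < r}. \<rho> M * (?\<Lambda> * norm ?d))"
      using T by (simp add: sum.inter_filter)
    also have "\<dots> = ?\<Lambda> * norm ?d * (\<Sum>M\<in>{M\<in>T. norm (a - bary M) < r}. \<rho> M)"
      by (simp add: sum_distrib_left mult.commute)
    finally show ?thesis using e1 by (simp add: sum.distrib)
  qed
  also have "\<dots> = \<epsilon>1 * norm ?d + ?\<Lambda> * norm ?d * (\<Sum>M\<in>{M\<in>T. norm (a - bary M) < r}. \<rho> M)"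
    using sum1 by simp
  finally show ?thesis .
qed

end


lemma sets_haus: "sets (hausdorff_measure s :: 'a::euclidean_space measure) = sets borel"
proof -
  have "sets (hausdorff_measure s :: 'a measure) = sigma_sets UNIV (sets borel)"
    unfolding hausdorff_measure_def by (rule sets_measure_of) simp
  also have "\<dots> = sets borel"
    using sets.sigma_sets_eq[of "borel :: 'a measure"] by simp
  finally show ?thesis .
qed

lemma cell_facts:
  fixes \<Omega> :: "'a::euclidean_space set"
  assumes \<Omega>: "bounded \<Omega>" and tess: "tessellation \<Omega> T" "mesh T = h"
    and z: "0 < \<zeta>" and h: "0 < h" and bl: "\<forall>K\<in>T. ball (bary K) (\<zeta> * h) \<subseteq> K" and K: "K \<in> T"
  shows "bounded K" "K \<in> lmeasurable" "0 < measure lebesgue K" "bary K \<in> K"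
    "\<forall>y\<in>closure K. norm (y - bary K) \<le> h" "K \<subseteq> \<Omega>" "open K" "diameter K \<le> h"
proof -
  have fin: "finite T" using tess unfolding tessellation_def by auto
  show KO: "K \<subseteq> \<Omega>" and oK: "open K" using tess K unfolding tessellation_def by auto
  show bK: "bounded K" using bounded_subset[OF \<Omega> KO] .
  show lK: "K \<in> lmeasurable" using lmeasurable_open[OF bK oK] .
  have zh: "0 < \<zeta> * h" using z h by simp
  have bsub: "ball (bary K) (\<zeta> * h) \<subseteq> K" using bl K by auto
  show "bary K \<in> K" using bsub centre_in_ball zh by blast
  have "0 < measure lebesgue (ball (bary K) (\<zeta> * h))" using content_ball_pos[OF zh] by simp
  also have "\<dots> \<le> measure lebesgue K" using bsub lK by (intro measure_mono_fmeasurable) auto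
  finally show "0 < measure lebesgue K" .
  show dK: "diameter K \<le> h" using tess(2) fin K unfolding mesh_def by auto
  show "\<forall>y\<in>closure K. norm (y - bary K) \<le> h"
  proof
    fix y assume y: "y \<in> closure K"
    have "bary K \<in> closure K" using \<open>bary K \<in> K\<close> closure_subset by auto
    then have "dist y (bary K) \<le> diameter (closure K)"
      using diameter_bounded_bound[OF bounded_closure[OF bK] y] by simp
    then show "norm (y - bary K) \<le> h" using dK diameter_closure[OF bK] by (simp add: dist_norm)
  qed
qed

lemma edge_facts:
  fixes \<Omega> :: "'a::euclidean_space set"
  assumes \<Omega>: "bounded \<Omega>" and tess: "tessellation \<Omega> T" "mesh T = h"
    and z: "0 < \<zeta>" and h: "0 < h" and bl: "\<forall>K\<in>T. ball (bary K) (\<zeta> * h) \<subseteq> K" and KL: "(K, L) \<in> edges T"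
  shows "K \<in> T" "L \<in> T" "norm (bary L - bary K) \<le> 2 * h"
proof -
  show KT: "K \<in> T" and LT: "L \<in> T" using KL unfolding edges_def by auto
  have "face K L \<noteq> {}"
  proof
    assume "face K L = {}"
    then show False using KL unfolding edges_def by simp
  qed
  then obtain p where p: "p \<in> closure K" "p \<in> closure L" unfolding face_def by auto
  have 1: "norm (p - bary K) \<le> h" using cell_facts(5)[OF \<Omega> tess z h bl KT] p(1) by auto
  have 2: "norm (p - bary L) \<le> h" using cell_facts(5)[OF \<Omega> tess z h bl LT] p(2) by auto
  have "norm (bary L - bary K) \<le> norm (p - bary L) + norm (p - bary K)"
    using norm_triangle_ineq4[of "bary L - p" "bary K - p"] by (simp add: norm_minus_commute)
  then show "norm (bary L - bary K) \<le> 2 * h" using 1 2 by simp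
qed



lemma a_choice:
  fixes Ce \<eta> :: real
  assumes "0 \<le> Ce" "0 < \<eta>"
  shows "1 < 2 + 2 * Ce / \<eta>" "Ce / ((2 + 2 * Ce / \<eta>) - 1) \<le> \<eta> / 2"
proof -
  have p: "0 \<le> 2 * Ce / \<eta>" using assms by simp
  then show "1 < 2 + 2 * Ce / \<eta>" by simp
  have pos: "0 < (2 + 2 * Ce / \<eta>) - 1" using p by simp
  have "2 * Ce \<le> \<eta> * ((2 + 2 * Ce / \<eta>) - 1)" using assms by (simp add: field_simps)
  then show "Ce / ((2 + 2 * Ce / \<eta>) - 1) \<le> \<eta> / 2" using pos assms by (simp add: field_simps)
qed

lemma main_est:
  fixes \<Omega> :: "'a::euclidean_space set" and H :: "real set" and T :: "real \<Rightarrow> 'a set set"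
    and \<rho> :: "real \<Rightarrow> 'a set \<Rightarrow> real" and V W :: "'a \<Rightarrow> real"
  assumes \<Omega>: "bounded \<Omega>" "convex \<Omega>" "open \<Omega>"
    and H: "H \<subseteq> {0<..}"
    and tess: "\<forall>h\<in>H. tessellation \<Omega> (T h) \<and> mesh (T h) = h"
    and z: "0 < \<zeta>" and bl: "\<forall>h\<in>H. \<forall>K\<in>T h. ball (bary K) (\<zeta> * h) \<subseteq> K"
    and V: "\<forall>x. V differentiable (at x)" "continuous_on UNIV (grad V)"
    and Wk: "Wk W LW"
    and prob: "\<forall>h\<in>H. (\<forall>K\<in>T h. \<rho> h K \<ge> 0) \<and> (\<Sum>K\<in>T h. \<rho> h K) = 1"
    and ent: "\<forall>h\<in>H. set_lebesgue_integral lebesgue \<Omega> (\<lambda>x. phi_ent (rhohat (T h) (\<rho> h) x)) \<le> C"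
    and e: "\<epsilon> > 0"
  shows "\<exists>h0>0. \<forall>h\<in>H. h < h0 \<longrightarrow> (\<forall>(K, L)\<in>edges (T h). \<forall>x\<in>closure K \<union> closure L.
        \<bar>qKL V W (T h) (\<rho> h) K L - grad (Qpot V W (rhohat (T h) (\<rho> h))) x \<bullet> (bary L - bary K)\<bar> \<le> \<epsilon> * h)"
proof -
  interpret Wk W LW by (rule Wk)
  define \<Lambda> where "\<Lambda> = LW + CW + 1"
  have \<Lambda>0: "\<Lambda> > 0" using LW0 CW0 by (simp add: \<Lambda>_def)
  define \<eta> where "\<eta> = \<epsilon> / (6 * \<Lambda>)"
  have \<eta>0: "\<eta> > 0" using e \<Lambda>0 by (simp add: \<eta>_def)
  define Ce where "Ce = max C 0"
  define a where "a = 2 + 2 * Ce / \<eta>"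
  have a1: "1 < a" and aC: "Ce / (a - 1) \<le> \<eta> / 2"
    using a_choice[of Ce \<eta>] \<eta>0 by (auto simp: a_def Ce_def)
  obtain s0 where s0: "s0 > 0" "\<And>y::'a. measure lebesgue (ball y s0) \<le> \<eta> / (2 * exp a)"
    using ball_small[of "\<eta> / (2 * exp a)"] \<eta>0 by auto
  define r where "r = s0 / 2"
  have r0: "r > 0" using s0 by (simp add: r_def)
  define \<epsilon>1 where "\<epsilon>1 = \<epsilon> / 6"
  have e10: "\<epsilon>1 > 0" using e by (simp add: \<epsilon>1_def)
  define R where "R = diameter \<Omega>"
  obtain \<delta> where \<delta>: "\<delta> > 0" and far: "\<And>z u w. r \<le> norm z \<Longrightarrow> norm z \<le> R \<Longrightarrow> norm u \<le> \<delta> \<Longrightarrow> norm w \<le> \<delta> \<Longrightarrow>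
     \<bar>W (z + u) - W z - grad W (z + w) \<bullet> u\<bar> \<le> \<epsilon>1 * norm u"
    using W_far[OF r0 e10, of R] by blast
  have "uniformly_continuous_on (closure \<Omega>) (grad V)"
    by (rule compact_uniformly_continuous[OF continuous_on_subset[OF V(2)]]) (use \<Omega>(1) in auto)
  moreover have e6: "\<epsilon> / 6 > 0" using e by simp
  ultimately obtain \<delta>V where \<delta>V0: "\<delta>V > 0" and
    \<delta>V1: "\<forall>y\<in>closure \<Omega>. \<forall>p\<in>closure \<Omega>. dist p y < \<delta>V \<longrightarrow> dist (grad V p) (grad V y) < \<epsilon> / 6"
    unfolding uniformly_continuous_on_def by blast
  have \<delta>V: "\<delta>V > 0"
    "\<And>p y. p \<in> closure \<Omega> \<Longrightarrow> y \<in> closure \<Omega> \<Longrightarrow> dist p y < \<delta>V \<Longrightarrow> dist (grad V p) (grad V y) < \<epsilon> / 6"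
    using \<delta>V0 \<delta>V1 by auto
  define h0 where "h0 = min (\<delta> / 4) (min r (\<delta>V / 6))"
  have h00: "h0 > 0" using \<delta> r0 \<delta>V by (simp add: h0_def)
  show ?thesis
  proof (rule exI[of _ h0], rule conjI[OF h00], rule ballI, rule impI)
    fix h assume hH: "h \<in> H" and hh0: "h < h0"
    have h: "0 < h" using H hH by auto
    have h\<delta>: "4 * h \<le> \<delta>" and hr: "h \<le> r" and hV: "6 * h < \<delta>V" using hh0 by (auto simp: h0_def)
    let ?T = "T h" and ?\<rho> = "\<rho> h"
    have tessT: "tessellation \<Omega> ?T" "mesh ?T = h" using tess hH by auto
    have blT: "\<forall>K\<in>?T. ball (bary K) (\<zeta> * h) \<subseteq> K" using bl hH by auto
    have finT: "finite ?T" using tessT unfolding tessellation_def by auto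
    have disj: "\<And>K L. K \<in> ?T \<Longrightarrow> L \<in> ?T \<Longrightarrow> K \<noteq> L \<Longrightarrow> K \<inter> L = {}"
      using tessT unfolding tessellation_def by auto
    note cf = cell_facts[OF \<Omega>(1) tessT z h blT]
    have rho: "\<And>M. M \<in> ?T \<Longrightarrow> 0 \<le> ?\<rho> M" and sum1: "(\<Sum>M\<in>?T. ?\<rho> M) = 1" using prob hH by auto
    have cellsL: "M \<in> lmeasurable \<and> bounded M" if "M \<in> ?T" for M using cf(1)[OF that] cf(2)[OF that] by blast
    have cellsE: "M \<subseteq> \<Omega> \<and> open M \<and> M \<in> lmeasurable \<and> 0 < measure lebesgue M" if "M \<in> ?T" for M
      using cf(2)[OF that] cf(3)[OF that] cf(6)[OF that] cf(7)[OF that] by blast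
    have cellsM: "M \<in> lmeasurable \<and> 0 < measure lebesgue M \<and> (\<forall>y\<in>M. norm (y - bary M) \<le> h)" if "M \<in> ?T" for M
      using cf(2)[OF that] cf(3)[OF that] cf(5)[OF that] closure_subset by blast
    have entH: "set_lebesgue_integral lebesgue \<Omega> (\<lambda>x. phi_ent (rhohat ?T ?\<rho> x)) \<le> C" using ent hH by blast
    have entS: "(\<Sum>M\<in>?T. measure lebesgue M * phi_ent (?\<rho> M / measure lebesgue M)) \<le> Ce"
    proof -
      have "(\<Sum>M\<in>?T. measure lebesgue M * phi_ent (?\<rho> M / measure lebesgue M)) \<le> C"
        by (rule ent_sum[OF finT \<Omega>(1,3) cellsE disj rho entH])
      then show ?thesis by (simp add: Ce_def)
    qed
    show "\<forall>(K, L)\<in>edges ?T. \<forall>x\<in>closure K \<union> closure L.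
        \<bar>qKL V W ?T ?\<rho> K L - grad (Qpot V W (rhohat ?T ?\<rho>)) x \<bullet> (bary L - bary K)\<bar> \<le> \<epsilon> * h"
    proof (intro ballI, clarify)
      fix K L x assume KL: "(K, L) \<in> edges ?T" and x: "x \<in> closure K \<union> closure L"
      note ef = edge_facts[OF \<Omega>(1) tessT z h blT KL]
      let ?d = "bary L - bary K"
      have nd: "norm ?d \<le> 2 * h" using ef by simp
      have xK: "norm (x - bary K) \<le> 3 * h"
      proof (cases "x \<in> closure K")
        case True then show ?thesis using cf(5)[OF ef(1)] h by auto
      next
        case False
        then have "x \<in> closure L" using x by auto
        then have "norm (x - bary L) \<le> h" using cf(5)[OF ef(2)] by auto
        moreover have "norm (x - bary K) \<le> norm (x - bary L) + norm ?d"
          using norm_triangle_ineq[of "x - bary L" ?d] by simp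
        ultimately show ?thesis using nd by simp
      qed
      have "closure K \<subseteq> closure \<Omega>" "closure L \<subseteq> closure \<Omega>"
        using closure_mono[OF cf(6)[OF ef(1)]] closure_mono[OF cf(6)[OF ef(2)]] by auto
      then have xO: "x \<in> closure \<Omega>" using x by blast
      have bKO: "bary K \<in> \<Omega>" "bary L \<in> \<Omega>" using cf(4)[OF ef(1)] cf(6)[OF ef(1)] cf(4)[OF ef(2)] cf(6)[OF ef(2)] by auto
      have G: "grad (Qpot V W (rhohat ?T ?\<rho>)) x = grad V x + (\<Sum>M\<in>?T. (?\<rho> M / measure lebesgue M) *\<^sub>R GM M x)"
        using Q_grad[OF finT, of V x "\<rho> h"] cellsL V(1) by blast
      have Vpart: "\<bar>V (bary L) - V (bary K) - grad V x \<bullet> ?d\<bar> \<le> \<epsilon> / 6 * norm ?d"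
      proof (rule seg_bound)
        fix p assume p: "p \<in> closed_segment (bary K) (bary L)"
        show "(V has_derivative (\<lambda>u. grad V p \<bullet> u)) (at p)" using grad_hasderiv V(1) by blast
        have pO: "p \<in> closure \<Omega>" using closed_segment_subset[OF bKO \<Omega>(2)] p closure_subset by blast
        have "dist p (bary K) \<le> dist (bary K) (bary L)" using dist_in_closed_segment[OF p] by simp
        then have "dist p (bary K) \<le> 2 * h" using nd by (simp add: dist_norm norm_minus_commute)
        moreover have "dist (bary K) x \<le> 3 * h" using xK by (simp add: dist_norm norm_minus_commute)
        moreover have "dist p x \<le> dist p (bary K) + dist (bary K) x" by (rule dist_triangle)
        ultimately have "dist p x < \<delta>V" using hV h by linarith
        then have "dist (grad V p) (grad V x) < \<epsilon> / 6" using \<delta>V(2)[OF pO xO] by simp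
        then show "norm (grad V p - grad V x) \<le> \<epsilon> / 6" by (simp add: dist_norm)
      qed
      define N where "N = (\<Sum>M\<in>{M\<in>?T. norm (bary K - bary M) < r}. ?\<rho> M)"
      have Wpart: "\<bar>(\<Sum>M\<in>?T. ?\<rho> M * (W (bary L - bary M) - W (bary K - bary M)))
           - (\<Sum>M\<in>?T. (?\<rho> M / measure lebesgue M) *\<^sub>R GM M x) \<bullet> ?d\<bar>
         \<le> \<epsilon>1 * norm ?d + (LW + CW) * norm ?d * N"
        unfolding N_def
      proof (rule W_sum_est[OF finT _ rho sum1 nd xK far _ h\<delta>])
        fix M assume MT: "M \<in> ?T"
        show "M \<in> lmeasurable \<and> 0 < measure lebesgue M \<and> (\<forall>y\<in>M. norm (y - bary M) \<le> h)"
          by (rule cellsM[OF MT])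
        have "dist (bary K) (bary M) \<le> diameter \<Omega>"
          by (rule diameter_bounded_bound[OF \<Omega>(1) bKO(1)]) (use cf(4)[OF MT] cf(6)[OF MT] in blast)
        then show "norm (bary K - bary M) \<le> R" by (simp add: R_def dist_norm)
      next
        show "0 \<le> \<epsilon>1" using e10 by simp
      qed
      have Nb: "N \<le> \<eta>"
      proof -
        have "N \<le> exp a * measure lebesgue (ball (bary K) s0) + Ce / (a - 1)"
          unfolding N_def
        proof (rule near_mass[OF finT _ disj _ rho entS a1])
          show "{M \<in> ?T. norm (bary K - bary M) < r} \<subseteq> ?T" by auto
          show "\<And>M. M \<in> ?T \<Longrightarrow> M \<in> lmeasurable \<and> 0 < measure lebesgue M" using cellsM by blast
          show "ball (bary K) s0 \<in> lmeasurable" by simp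
          fix M assume M: "M \<in> {M \<in> ?T. norm (bary K - bary M) < r}"
          show "M \<subseteq> ball (bary K) s0"
          proof
            fix y assume y: "y \<in> M"
            have "norm (y - bary M) \<le> h" using cellsM[of M] M y by blast
            moreover have "norm (bary K - y) \<le> norm (bary K - bary M) + norm (y - bary M)"
              using norm_triangle_ineq4[of "bary K - bary M" "y - bary M"] by simp
            ultimately have "norm (bary K - y) < r + h" using M by simp
            then show "y \<in> ball (bary K) s0" using hr by (simp add: dist_norm r_def)
          qed
        qed
        also have "\<dots> \<le> exp a * (\<eta> / (2 * exp a)) + \<eta> / 2"
          using s0(2)[of "bary K"] aC by (intro add_mono mult_left_mono) auto
        also have "\<dots> = \<eta>" by simp
        finally show ?thesis .
      qed
      have q: "qKL V W ?T ?\<rho> K L = (V (bary L) - V (bary K)) + (\<Sum>M\<in>?T. ?\<rho> M * (W (bary L - bary M) - W (bary K - bary M)))"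
        by (simp add: qKL_def)
      have b1: "\<bar>qKL V W ?T ?\<rho> K L - grad (Qpot V W (rhohat ?T ?\<rho>)) x \<bullet> ?d\<bar>
          \<le> \<epsilon> / 6 * norm ?d + (\<epsilon>1 * norm ?d + (LW + CW) * norm ?d * N)"
        using Vpart Wpart unfolding q G inner_add_left by linarith
      have b2: "(LW + CW) * norm ?d * N \<le> \<Lambda> * norm ?d * \<eta>"
      proof -
        have "(LW + CW) * norm ?d * N \<le> (LW + CW) * norm ?d * \<eta>"
          using Nb LW0 CW0 by (intro mult_left_mono) auto
        also have "\<dots> \<le> \<Lambda> * norm ?d * \<eta>" using \<eta>0 by (intro mult_right_mono) (auto simp: \<Lambda>_def)
        finally show ?thesis .
      qed
      have b3: "\<Lambda> * norm ?d * \<eta> = \<epsilon> / 6 * norm ?d" using \<Lambda>0 by (simp add: \<eta>_def)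
      have b4: "\<epsilon> / 6 * norm ?d + (\<epsilon>1 * norm ?d + \<epsilon> / 6 * norm ?d) = \<epsilon> / 2 * norm ?d"
        by (simp add: \<epsilon>1_def)
      have b5: "\<epsilon> / 2 * norm ?d \<le> \<epsilon> / 2 * (2 * h)" using nd e by (intro mult_left_mono) auto
      have b6: "\<epsilon> / 2 * (2 * h) = \<epsilon> * h" by simp
      show "\<bar>qKL V W ?T ?\<rho> K L - grad (Qpot V W (rhohat ?T ?\<rho>)) x \<bullet> ?d\<bar> \<le> \<epsilon> * h"
        using b1 b2 b3 b4 b5 b6 by linarith
    qed
  qed
qed



lemma G_facts:
  fixes \<Omega> :: "'a::euclidean_space set"
  assumes \<Omega>: "bounded \<Omega>" and tess: "tessellation \<Omega> T" "mesh T = h"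
    and z: "0 < \<zeta>" and h: "0 < h" and bl: "\<forall>K\<in>T. ball (bary K) (\<zeta> * h) \<subseteq> K"
    and V: "\<forall>x. V differentiable (at x)" "continuous_on UNIV (grad V)"
    and Wk: "Wk W LW"
  shows "continuous_on UNIV (grad (Qpot V W (rhohat T \<rho>)))"
proof -
  interpret Wk W LW by (rule Wk)
  have finT: "finite T" using tess unfolding tessellation_def by auto
  note cf = cell_facts[OF \<Omega> tess z h bl]
  have cellsL: "M \<in> lmeasurable \<and> bounded M" if "M \<in> T" for M using cf(1)[OF that] cf(2)[OF that] by blast
  have "grad (Qpot V W (rhohat T \<rho>)) = (\<lambda>x. grad V x + (\<Sum>M\<in>T. (\<rho> M / measure lebesgue M) *\<^sub>R GM M x))"
  proof
    fix x show "grad (Qpot V W (rhohat T \<rho>)) x = grad V x + (\<Sum>M\<in>T. (\<rho> M / measure lebesgue M) *\<^sub>R GM M x)"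
      using Q_grad[OF finT, of V x \<rho>] cellsL V(1) by blast
  qed
  moreover have "continuous_on UNIV (\<lambda>x. grad V x + (\<Sum>M\<in>T. (\<rho> M / measure lebesgue M) *\<^sub>R GM M x))"
    using Q_grad_cont[OF finT, of V \<rho>] cellsL V(2) by blast
  ultimately show ?thesis by simp
qed

lemma bdd_closure_img:
  fixes G :: "'a::euclidean_space \<Rightarrow> 'b::real_normed_vector"
  assumes "continuous_on UNIV G" "bounded K" "A \<subseteq> closure K"
  shows "bounded (G ` A)"
proof -
  have "compact (G ` closure K)"
    by (rule compact_continuous_image[OF continuous_on_subset[OF assms(1)]]) (use assms(2) compact_closure in auto)
  then have "bounded (G ` closure K)" by (rule compact_imp_bounded)
  then show ?thesis by (rule bounded_subset) (use assms(3) in auto)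
qed

theorem lemma4p11:
  fixes \<Omega> :: "'a::euclidean_space set"
    and H :: "real set"
    and T :: "real \<Rightarrow> 'a set set"
    and \<rho> :: "real \<Rightarrow> 'a set \<Rightarrow> real"
    and g :: "'a \<Rightarrow> real"
    and V W :: "'a \<Rightarrow> real"
    and \<zeta> LV LW :: real
  assumes \<Omega>: "open \<Omega>" "bounded \<Omega>" "convex \<Omega>"
    and H: "H \<subseteq> {0<..}"
    and tess: "\<forall>h\<in>H. tessellation \<Omega> (T h) \<and> mesh (T h) = h"
    and nondeg: "0 < \<zeta>" "\<zeta> < 1"
      "\<forall>h\<in>H. \<forall>K\<in>T h. ball (bary K) (\<zeta> * h) \<subseteq> K"
      "\<forall>h\<in>H. \<forall>(K, L)\<in>edges (T h).
          measure (hausdorff_measure (DIM('a) - 1)) (face K L) \<ge> \<zeta> * h ^ (DIM('a) - 1)"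
    and orth: "\<forall>h\<in>H. \<forall>(K, L)\<in>edges (T h). \<forall>y\<in>face K L. \<forall>z\<in>face K L.
          (y - z) \<bullet> (bary L - bary K) = 0"
    and V: "LV-lipschitz_on UNIV V" "\<forall>x. V differentiable (at x)"
      "continuous_on UNIV (grad V)" "bdd_below (range V)"
    and W: "\<forall>x. W x \<ge> 0" "\<forall>x. W x = W (- x)" "LW-lipschitz_on UNIV W"
      "\<forall>x. x \<noteq> 0 \<longrightarrow> W differentiable (at x)" "continuous_on (- {0}) (grad W)"
    and prob: "\<forall>h\<in>H. (\<forall>K\<in>T h. \<rho> h K \<ge> 0) \<and> (\<Sum>K\<in>T h. \<rho> h K) = 1"
    and g: "set_integrable lebesgue \<Omega> g"
    and L1conv: "((\<lambda>h. set_lebesgue_integral lebesgue \<Omega> (\<lambda>x. \<bar>rhohat (T h) (\<rho> h) x - g x\<bar>))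
                  \<longlongrightarrow> 0) (at 0 within H)"
    and entropy: "\<exists>C. \<forall>h\<in>H. set_lebesgue_integral lebesgue \<Omega> (\<lambda>x. phi_ent (rhohat (T h) (\<rho> h) x)) \<le> C"
  shows
    "(\<forall>\<epsilon>>0. \<forall>\<^sub>F h in at 0 within H. \<forall>(K, L)\<in>edges (T h). \<forall>x\<in>K \<union> L.
        \<bar>qKL V W (T h) (\<rho> h) K L
          - grad (Qpot V W (rhohat (T h) (\<rho> h))) x \<bullet> (bary L - bary K)\<bar> \<le> \<epsilon> * h)
   \<and> (\<forall>\<epsilon>>0. \<forall>\<^sub>F h in at 0 within H. \<forall>(K, L)\<in>edges (T h).
        \<bar>qKL V W (T h) (\<rho> h) K L
          - ((1 / measure lebesgue K) *\<^sub>R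
               set_lebesgue_integral lebesgue K (grad (Qpot V W (rhohat (T h) (\<rho> h)))))
             \<bullet> (bary L - bary K)\<bar> \<le> \<epsilon> * h)
   \<and> (\<forall>\<epsilon>>0. \<forall>\<^sub>F h in at 0 within H. \<forall>(K, L)\<in>edges (T h).
        \<bar>qKL V W (T h) (\<rho> h) K L
          - ((1 / measure (hausdorff_measure (DIM('a) - 1)) (face K L)) *\<^sub>R
               set_lebesgue_integral (hausdorff_measure (DIM('a) - 1)) (face K L)
                 (grad (Qpot V W (rhohat (T h) (\<rho> h)))))
             \<bullet> (bary L - bary K)\<bar> \<le> \<epsilon> * h)"
proof -
  have Wk: "Wk W LW" by (rule Wk.intro) (use W(3,4,5) in auto)
  obtain C where C: "\<forall>h\<in>H. set_lebesgue_integral lebesgue \<Omega> (\<lambda>x. phi_ent (rhohat (T h) (\<rho> h) x)) \<le> C"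
    using entropy by blast
  let ?G = "\<lambda>h. grad (Qpot V W (rhohat (T h) (\<rho> h)))"
  have ME: "\<exists>h0>0. \<forall>h\<in>H. h < h0 \<longrightarrow> (\<forall>(K, L)\<in>edges (T h). \<forall>x\<in>closure K \<union> closure L.
        \<bar>qKL V W (T h) (\<rho> h) K L - ?G h x \<bullet> (bary L - bary K)\<bar> \<le> \<epsilon> * h)" if e: "\<epsilon> > 0" for \<epsilon>
    by (rule main_est[OF \<Omega>(2) \<Omega>(3) \<Omega>(1) H tess nondeg(1) nondeg(3) V(2) V(3) Wk prob C e])
  have ev: "eventually P (at 0 within H)" if ex: "\<exists>h0>0. \<forall>h\<in>H. h < h0 \<longrightarrow> P h" for P
  proof -
    obtain h0 where h0: "h0 > 0" "\<forall>h\<in>H. h < h0 \<longrightarrow> P h" using ex by blast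
    show ?thesis unfolding eventually_at
      by (rule exI[of _ h0]) (use h0 in \<open>auto simp: dist_real_def\<close>)
  qed
  have hfacts: "0 < h \<and> tessellation \<Omega> (T h) \<and> mesh (T h) = h \<and> (\<forall>K\<in>T h. ball (bary K) (\<zeta> * h) \<subseteq> K)
      \<and> continuous_on UNIV (?G h)" if hH: "h \<in> H" for h
  proof -
    have h: "0 < h" using H hH by auto
    have tessT: "tessellation \<Omega> (T h)" "mesh (T h) = h" using tess hH by auto
    have blT: "\<forall>K\<in>T h. ball (bary K) (\<zeta> * h) \<subseteq> K" using nondeg(3) hH by auto
    have "continuous_on UNIV (?G h)" by (rule G_facts[OF \<Omega>(2) tessT nondeg(1) h blT V(2) V(3) Wk])
    then show ?thesis using h tessT blT by blast
  qed
  show ?thesis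
  proof (intro conjI allI impI)
    fix \<epsilon> :: real assume e: "\<epsilon> > 0"
    obtain h0 where h0: "h0 > 0" "\<forall>h\<in>H. h < h0 \<longrightarrow> (\<forall>(K, L)\<in>edges (T h). \<forall>x\<in>closure K \<union> closure L.
        \<bar>qKL V W (T h) (\<rho> h) K L - ?G h x \<bullet> (bary L - bary K)\<bar> \<le> \<epsilon> * h)" using ME[OF e] by blast
    show "\<forall>\<^sub>F h in at 0 within H. \<forall>(K, L)\<in>edges (T h). \<forall>x\<in>K \<union> L.
        \<bar>qKL V W (T h) (\<rho> h) K L - ?G h x \<bullet> (bary L - bary K)\<bar> \<le> \<epsilon> * h"
    proof (rule ev, rule exI[of _ h0], rule conjI[OF h0(1)], rule ballI, rule impI)
      fix h assume "h \<in> H" "h < h0"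
      then have A: "\<forall>(K, L)\<in>edges (T h). \<forall>x\<in>closure K \<union> closure L.
        \<bar>qKL V W (T h) (\<rho> h) K L - ?G h x \<bullet> (bary L - bary K)\<bar> \<le> \<epsilon> * h" using h0(2) by blast
      show "\<forall>(K, L)\<in>edges (T h). \<forall>x\<in>K \<union> L.
        \<bar>qKL V W (T h) (\<rho> h) K L - ?G h x \<bullet> (bary L - bary K)\<bar> \<le> \<epsilon> * h"
      proof (intro ballI, clarify)
        fix K L x assume KL: "(K, L) \<in> edges (T h)" and x: "x \<in> K \<union> L"
        have "x \<in> closure K \<union> closure L" using x closure_subset by blast
        then show "\<bar>qKL V W (T h) (\<rho> h) K L - ?G h x \<bullet> (bary L - bary K)\<bar> \<le> \<epsilon> * h" using A KL by blast
      qed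
    qed
  next
    fix \<epsilon> :: real assume e: "\<epsilon> > 0"
    obtain h0 where h0: "h0 > 0" "\<forall>h\<in>H. h < h0 \<longrightarrow> (\<forall>(K, L)\<in>edges (T h). \<forall>x\<in>closure K \<union> closure L.
        \<bar>qKL V W (T h) (\<rho> h) K L - ?G h x \<bullet> (bary L - bary K)\<bar> \<le> \<epsilon> * h)" using ME[OF e] by blast
    show "\<forall>\<^sub>F h in at 0 within H. \<forall>(K, L)\<in>edges (T h).
        \<bar>qKL V W (T h) (\<rho> h) K L
          - ((1 / measure lebesgue K) *\<^sub>R set_lebesgue_integral lebesgue K (?G h)) \<bullet> (bary L - bary K)\<bar> \<le> \<epsilon> * h"
    proof (rule ev, rule exI[of _ h0], rule conjI[OF h0(1)], rule ballI, rule impI)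
      fix h assume hH: "h \<in> H" and hh: "h < h0"
      then have A: "\<forall>(K, L)\<in>edges (T h). \<forall>x\<in>closure K \<union> closure L.
        \<bar>qKL V W (T h) (\<rho> h) K L - ?G h x \<bullet> (bary L - bary K)\<bar> \<le> \<epsilon> * h" using h0(2) by blast
      have hf: "0 < h" "tessellation \<Omega> (T h)" "mesh (T h) = h" "\<forall>K\<in>T h. ball (bary K) (\<zeta> * h) \<subseteq> K"
        "continuous_on UNIV (?G h)" using hfacts[OF hH] by auto
      show "\<forall>(K, L)\<in>edges (T h).
        \<bar>qKL V W (T h) (\<rho> h) K L
          - ((1 / measure lebesgue K) *\<^sub>R set_lebesgue_integral lebesgue K (?G h)) \<bullet> (bary L - bary K)\<bar> \<le> \<epsilon> * h"
      proof (intro ballI, clarify)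
        fix K L assume KL: "(K, L) \<in> edges (T h)"
        have KT: "K \<in> T h" using KL unfolding edges_def by auto
        note cf = cell_facts[OF \<Omega>(2) hf(2,3) nondeg(1) hf(1) hf(4) KT]
        show "\<bar>qKL V W (T h) (\<rho> h) K L
          - ((1 / measure lebesgue K) *\<^sub>R set_lebesgue_integral lebesgue K (?G h)) \<bullet> (bary L - bary K)\<bar> \<le> \<epsilon> * h"
        proof (rule avg_close)
          show "K \<in> sets lebesgue" using cf(2) by auto
          show "0 < measure lebesgue K" by (rule cf(3))
          show "?G h \<in> borel_measurable lebesgue" by (rule bor_leb[OF borel_measurable_continuous_onI[OF hf(5)]])
          show "bounded (?G h ` K)" by (rule bdd_closure_img[OF hf(5) cf(1) closure_subset])
          fix x assume "x \<in> K"
          then have "x \<in> closure K \<union> closure L" using closure_subset by blast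
          then show "\<bar>qKL V W (T h) (\<rho> h) K L - ?G h x \<bullet> (bary L - bary K)\<bar> \<le> \<epsilon> * h" using A KL by blast
        qed
      qed
    qed
  next
    fix \<epsilon> :: real assume e: "\<epsilon> > 0"
    obtain h0 where h0: "h0 > 0" "\<forall>h\<in>H. h < h0 \<longrightarrow> (\<forall>(K, L)\<in>edges (T h). \<forall>x\<in>closure K \<union> closure L.
        \<bar>qKL V W (T h) (\<rho> h) K L - ?G h x \<bullet> (bary L - bary K)\<bar> \<le> \<epsilon> * h)" using ME[OF e] by blast
    let ?HM = "hausdorff_measure (DIM('a) - 1) :: 'a measure"
    show "\<forall>\<^sub>F h in at 0 within H. \<forall>(K, L)\<in>edges (T h).
        \<bar>qKL V W (T h) (\<rho> h) K L
          - ((1 / measure ?HM (face K L)) *\<^sub>R set_lebesgue_integral ?HM (face K L) (?G h)) \<bullet> (bary L - bary K)\<bar> \<le> \<epsilon> * h"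
    proof (rule ev, rule exI[of _ h0], rule conjI[OF h0(1)], rule ballI, rule impI)
      fix h assume hH: "h \<in> H" and hh: "h < h0"
      then have A: "\<forall>(K, L)\<in>edges (T h). \<forall>x\<in>closure K \<union> closure L.
        \<bar>qKL V W (T h) (\<rho> h) K L - ?G h x \<bullet> (bary L - bary K)\<bar> \<le> \<epsilon> * h" using h0(2) by blast
      have hf: "0 < h" "tessellation \<Omega> (T h)" "mesh (T h) = h" "\<forall>K\<in>T h. ball (bary K) (\<zeta> * h) \<subseteq> K"
        "continuous_on UNIV (?G h)" using hfacts[OF hH] by auto
      show "\<forall>(K, L)\<in>edges (T h).
        \<bar>qKL V W (T h) (\<rho> h) K L
          - ((1 / measure ?HM (face K L)) *\<^sub>R set_lebesgue_integral ?HM (face K L) (?G h)) \<bullet> (bary L - bary K)\<bar> \<le> \<epsilon> * h"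
      proof (intro ballI, clarify)
        fix K L assume KL: "(K, L) \<in> edges (T h)"
        have KT: "K \<in> T h" using KL unfolding edges_def by auto
        note cf = cell_facts[OF \<Omega>(2) hf(2,3) nondeg(1) hf(1) hf(4) KT]
        have fK: "face K L \<subseteq> closure K" by (auto simp: face_def)
        show "\<bar>qKL V W (T h) (\<rho> h) K L
          - ((1 / measure ?HM (face K L)) *\<^sub>R set_lebesgue_integral ?HM (face K L) (?G h)) \<bullet> (bary L - bary K)\<bar> \<le> \<epsilon> * h"
        proof (rule avg_close)
          have "closed (face K L)" by (simp add: face_def closed_Int)
          then show "face K L \<in> sets ?HM" unfolding sets_haus by (rule borel_closed)
          have "measure ?HM (face K L) \<ge> \<zeta> * h ^ (DIM('a) - 1)" using nondeg(4) hH KL by auto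
          moreover have "0 < \<zeta> * h ^ (DIM('a) - 1)" using nondeg(1) hf(1) by simp
          ultimately show "0 < measure ?HM (face K L)" by linarith
          show "?G h \<in> borel_measurable ?HM"
            using borel_measurable_continuous_onI[OF hf(5)] measurable_cong_sets[OF sets_haus refl] by blast
          show "bounded (?G h ` face K L)" by (rule bdd_closure_img[OF hf(5) cf(1) fK])
          fix x assume "x \<in> face K L"
          then have "x \<in> closure K \<union> closure L" using fK by blast
          then show "\<bar>qKL V W (T h) (\<rho> h) K L - ?G h x \<bullet> (bary L - bary K)\<bar> \<le> \<epsilon> * h" using A KL by blast
        qed
      qed
    qed
  qed
qed


end
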